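(* Let $k\ge1$ be odd, $\omega=i\sqrt2$, $\Gamma_2=\mathbf{PSL}(2,\mathbb{Z}[\sqrt{-2}])$, $S=\begin{psmallmatrix}0&-1\\1&0\end{psmallmatrix}$, $T=\begin{psmallmatrix}1&1\\0&1\end{psmallmatrix}$, $T_\omega=\begin{psmallmatrix}1&\omega\\0&1\end{psmallmatrix}$, $U=TS$. Let $C_p(\Gamma_2,V_{k,k})$ be the space of maps $f:\Gamma_2\to V_{k,k}$ with $f(\gamma_1\gamma_2)=f(\gamma_1)|\gamma_2+f(\gamma_2)$ for all $\gamma_1,\gamma_2$ and $f(T)=f(T_\omega)=0$, and $$W_{k,k}=\ker(\mathbf{1}+S)\cap\ker(\mathbf{1}+U+U^2)\cap\ker(\mathbf{1}+ST_\omega+T_\omega S+T_\omega^{-1}ST_\omega S).$$ Then $f\mapsto f(S)$ is a $\mathbb{C}$-linear isomorphism $C_p(\Gamma_2,V_{k,k})\to W_{k,k}$.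
   Context: $V_{k,k}$: polynomials $\sum_{0\le i,j\le k}c_{ij}z^i\bar z^j$ over $\mathbb{C}$ with right action $(P|\gamma)(z,\bar z)=(cz+e)^k\overline{(cz+e)}^kP\!\left(\frac{az+b}{cz+e},\frac{\bar a\bar z+\bar b}{\bar c\bar z+\bar e}\right)$ for $\gamma=\begin{psmallmatrix}a&b\\c&e\end{psmallmatrix}$, extended linearly to the group ring; $\ker(X)=\{P:P|X=0\}$. *)

theory Defs
  imports Complex_Main "HOL-Computational_Algebra.Polynomial"
begin

text \<open>2x2 complex matrices (a,b,c,e) standing for the matrix with rows (a b) and (c e).\<close>
type_synonym mat2 = "complex \<times> complex \<times> complex \<times> complex"

fun mmul :: "mat2 \<Rightarrow> mat2 \<Rightarrow> mat2" where
  "mmul (a, b, c, e) (a', b', c', e') =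
     (a * a' + b * c', a * b' + b * e', c * a' + e * c', c * b' + e * e')"

fun mneg :: "mat2 \<Rightarrow> mat2" where
  "mneg (a, b, c, e) = (- a, - b, - c, - e)"

fun mdet :: "mat2 \<Rightarrow> complex" where
  "mdet (a, b, c, e) = a * e - b * c"

definition omega :: complex where
  "omega = \<i> * complex_of_real (sqrt 2)"

definition in_O :: "complex \<Rightarrow> bool" where
  "in_O z \<longleftrightarrow> (\<exists>m n :: int. z = of_int m + of_int n * omega)"

definition SL2O :: "mat2 set" where
  "SL2O = {(a, b, c, e). in_O a \<and> in_O b \<and> in_O c \<and> in_O e \<and> a * e - b * c = 1}"

text \<open>Elements of PSL(2, Z[sqrt(-2)]) are the classes {M, -M}.\<close>
definition pcl :: "mat2 \<Rightarrow> mat2 set" where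
  "pcl M = {M, mneg M}"

definition Gamma2 :: "mat2 set set" where
  "Gamma2 = pcl ` SL2O"

definition pmul :: "mat2 set \<Rightarrow> mat2 set \<Rightarrow> mat2 set" where
  "pmul X Y = (\<lambda>(M, N). mmul M N) ` (X \<times> Y)"

definition rep :: "mat2 set \<Rightarrow> mat2" where
  "rep X = (SOME M. M \<in> X)"

definition matS :: mat2 where "matS = (0, -1, 1, 0)"
definition matT :: mat2 where "matT = (1, 1, 0, 1)"
definition matTw :: mat2 where "matTw = (1, omega, 0, 1)"
definition matTwinv :: mat2 where "matTwinv = (1, - omega, 0, 1)"
definition matU :: mat2 where "matU = mmul matT matS"

text \<open>Polynomials in z and zbar: an element of type complex poly poly; the outer
  variable is zbar, the inner one (coefficients) is z. So the coefficient of
  z^i zbar^j in P is coeff (coeff P j) i.\<close>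
definition Vkk :: "nat \<Rightarrow> complex poly poly set" where
  "Vkk k = {P. degree P \<le> k \<and> (\<forall>j. degree (coeff P j) \<le> k)}"

text \<open>The slash action, computed formally:
  (cz+e)^k conj(cz+e)^k (z^i zbar^j)[z := (az+b)/(cz+e)] =
  (az+b)^i (cz+e)^(k-i) (conj a zbar + conj b)^j (conj c zbar + conj e)^(k-j).\<close>
definition slash :: "nat \<Rightarrow> complex poly poly \<Rightarrow> mat2 \<Rightarrow> complex poly poly" where
  "slash k P M = (case M of (a, b, c, e) \<Rightarrow>
     (\<Sum>i\<le>k. \<Sum>j\<le>k. [:[:coeff (coeff P j) i:]:]
        * [:[:b, a:]:] ^ i * [:[:e, c:]:] ^ (k - i)
        * [:[:cnj b:], [:cnj a:]:] ^ j * [:[:cnj e:], [:cnj c:]:] ^ (k - j)))"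

definition pslash :: "nat \<Rightarrow> complex poly poly \<Rightarrow> mat2 set \<Rightarrow> complex poly poly" where
  "pslash k P X = slash k P (rep X)"

text \<open>Parabolic cocycles C_p(Gamma_2, V_{k,k}) (functions extended by 0 off Gamma_2).\<close>
definition Cp :: "nat \<Rightarrow> (mat2 set \<Rightarrow> complex poly poly) set" where
  "Cp k = {f. (\<forall>X\<in>Gamma2. f X \<in> Vkk k) \<and> (\<forall>X. X \<notin> Gamma2 \<longrightarrow> f X = 0)
            \<and> (\<forall>X\<in>Gamma2. \<forall>Y\<in>Gamma2. f (pmul X Y) = pslash k (f X) Y + f Y)
            \<and> f (pcl matT) = 0 \<and> f (pcl matTw) = 0}"

definition Wkk :: "nat \<Rightarrow> complex poly poly set" where
  "Wkk k = {P \<in> Vkk k.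
     P + slash k P matS = 0 \<and>
     P + slash k P matU + slash k P (mmul matU matU) = 0 \<and>
     P + slash k P (mmul matS matTw) + slash k P (mmul matTw matS)
       + slash k P (mmul (mmul (mmul matTwinv matS) matTw) matS) = 0}"

end

theory Submission
  imports Defs
begin

lemma omega_sq: "omega * omega = -2"
proof -
  have "omega * omega = (\<i> * \<i>) * complex_of_real (sqrt 2 * sqrt 2)"
    unfolding omega_def by (simp only: of_real_mult mult_ac)
  also have "\<dots> = -2" by simp
  finally show ?thesis .
qed

lemma cnj_omega: "cnj omega = - omega"
  by (simp add: omega_def)

lemma Re_omega: "Re omega = 0" and Im_omega: "Im omega = sqrt 2"
  by (simp_all add: omega_def)

lemma in_O_add: assumes "in_O a" "in_O b" shows "in_O (a + b)"
proof -
  obtain m n where a: "a = of_int m + of_int n * omega" using assms(1) in_O_def by auto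
  obtain m' n' where b: "b = of_int m' + of_int n' * omega" using assms(2) in_O_def by auto
  show ?thesis unfolding in_O_def a b
    by (rule exI[of _ "m+m'"], rule exI[of _ "n+n'"]) (simp add: algebra_simps)
qed

lemma in_O_uminus: "in_O a \<Longrightarrow> in_O (- a)"
  unfolding in_O_def
  apply clarify
  subgoal for m n by (rule exI[of _ "-m"], rule exI[of _ "-n"]) (simp add: algebra_simps)
  done

lemma in_O_diff: "in_O a \<Longrightarrow> in_O b \<Longrightarrow> in_O (a - b)"
  using in_O_add[of a "-b"] in_O_uminus[of b] by simp

lemma in_O_mult: assumes "in_O a" "in_O b" shows "in_O (a * b)"
proof -
  obtain m n where a: "a = of_int m + of_int n * omega" using assms(1) in_O_def by auto
  obtain m' n' where b: "b = of_int m' + of_int n' * omega" using assms(2) in_O_def by auto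
  have "a * b = of_int (m*m') + of_int (m*n'+n*m') * omega + of_int (n*n') * (omega * omega)"
    unfolding a b by (simp add: algebra_simps)
  also have "\<dots> = of_int (m*m' - 2*n*n') + of_int (m*n'+n*m') * omega"
    unfolding omega_sq by simp
  finally have "a * b = of_int (m*m' - 2*n*n') + of_int (m*n'+n*m') * omega" .
  then show ?thesis unfolding in_O_def by blast
qed

lemma in_O_of_int[simp]: "in_O (of_int m)"
  unfolding in_O_def by (rule exI[of _ m], rule exI[of _ 0]) simp

lemma in_O_0[simp]: "in_O 0" and in_O_1[simp]: "in_O 1" and in_O_omega[simp]: "in_O omega"
  unfolding in_O_def
    apply (rule exI[of _ 0], rule exI[of _ 0], simp)
   apply (rule exI[of _ 1], rule exI[of _ 0], simp)
  apply (rule exI[of _ 0], rule exI[of _ 1], simp)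
  done

lemma in_O_norm: assumes "in_O z" shows "\<exists>m n::int. z = of_int m + of_int n * omega \<and> (cmod z)^2 = of_int (m^2 + 2*n^2)"
proof -
  obtain m n :: int where z: "z = of_int m + of_int n * omega" using assms in_O_def by auto
  have "(cmod z)^2 = (Re z)^2 + (Im z)^2" by (simp add: cmod_power2)
  also have "\<dots> = of_int (m^2 + 2*n^2)" by (simp add: z Re_omega Im_omega power_mult_distrib)
  finally show ?thesis using z by blast
qed


lemma sqrt2_sq: "sqrt 2 * sqrt 2 = (2::real)" by simp

lemma Re_omega_mult: "Re (omega * z) = - sqrt 2 * Im z" and Im_omega_mult: "Im (omega * z) = sqrt 2 * Re z"
  by (simp_all add: omega_def)

lemma cmod_sq: "(cmod z)^2 = (Re z)^2 + (Im z)^2" by (simp add: cmod_power2)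

lemma euclid_O:
  assumes a: "in_O a" and c: "in_O c" and c0: "c \<noteq> 0"
  shows "\<exists>l. in_O l \<and> cmod (a + l * c) < cmod c"
proof -
  define z where "z = - a / c"
  define m where "m = round (Re z)"
  define n where "n = round (Im z / sqrt 2)"
  define l where "l = of_int m + of_int n * omega"
  have lO: "in_O l" unfolding l_def in_O_def by blast
  have h1: "\<bar>of_int m - Re z\<bar> \<le> 1/2" unfolding m_def by (rule of_int_round_abs_le)
  have h2: "\<bar>of_int n - Im z / sqrt 2\<bar> \<le> 1/2" unfolding n_def by (rule of_int_round_abs_le)
  have e: "sqrt 2 * (of_int n - Im z / sqrt 2) = sqrt 2 * of_int n - Im z" by (simp add: right_diff_distrib)
  have "\<bar>sqrt 2 * of_int n - Im z\<bar> = \<bar>sqrt 2 * (of_int n - Im z / sqrt 2)\<bar>" unfolding e ..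
  also have "\<dots> = sqrt 2 * \<bar>of_int n - Im z / sqrt 2\<bar>" by (simp add: abs_mult)
  finally have "\<bar>sqrt 2 * of_int n - Im z\<bar> = sqrt 2 * \<bar>of_int n - Im z / sqrt 2\<bar>" .
  then have h3: "\<bar>sqrt 2 * of_int n - Im z\<bar> \<le> sqrt 2 / 2" using h2 by simp
  have "(Re (l - z))^2 \<le> 1/4"
  proof -
    have "Re (l - z) = of_int m - Re z" by (simp add: l_def Re_omega)
    then have "(Re (l - z))^2 = \<bar>of_int m - Re z\<bar>^2" by simp
    also have "\<dots> \<le> (1/2)^2" by (rule power_mono) (use h1 in simp_all)
    finally show ?thesis by (simp add: power_divide)
  qed
  moreover have "(Im (l - z))^2 \<le> 1/2"
  proof -
    have "Im (l - z) = sqrt 2 * of_int n - Im z" by (simp add: l_def Im_omega)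
    then have "(Im (l - z))^2 = \<bar>sqrt 2 * of_int n - Im z\<bar>^2" by simp
    also have "\<dots> \<le> (sqrt 2 / 2)^2" by (rule power_mono) (use h3 in simp_all)
    also have "(sqrt 2 / 2)^2 = (1/2::real)" by (simp add: power_divide)
    finally show ?thesis .
  qed
  ultimately have "(cmod (l - z))^2 < 1^2" by (simp add: cmod_sq)
  then have lz: "cmod (l - z) < 1" by (rule power_less_imp_less_base) simp
  have "a + l * c = c * (l - z)" using c0 by (simp add: z_def field_simps)
  then have "cmod (a + l * c) = cmod c * cmod (l - z)" by (simp add: norm_mult)
  also have "\<dots> < cmod c" using lz c0 by simp
  finally show ?thesis using lO by blast
qed

definition nO :: "complex \<Rightarrow> nat" where "nO z = nat \<lfloor>(cmod z)^2\<rfloor>"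

lemma nO_real: assumes "in_O z" shows "real (nO z) = (cmod z)^2"
proof -
  obtain m n :: int where "(cmod z)^2 = of_int (m^2 + 2*n^2)" using in_O_norm[OF assms] by blast
  moreover have "m^2 + 2*n^2 \<ge> 0" by simp
  ultimately show ?thesis unfolding nO_def by simp
qed

lemma nO_less: "in_O a \<Longrightarrow> in_O b \<Longrightarrow> nO a < nO b \<longleftrightarrow> cmod a < cmod b"
proof -
  assume "in_O a" "in_O b"
  then have "nO a < nO b \<longleftrightarrow> (cmod a)^2 < (cmod b)^2" by (simp flip: nO_real)
  also have "\<dots> \<longleftrightarrow> cmod a < cmod b"
  proof
    assume "(cmod a)^2 < (cmod b)^2" then show "cmod a < cmod b" by (rule power_less_imp_less_base) simp
  next
    assume "cmod a < cmod b" then show "(cmod a)^2 < (cmod b)^2" by (rule power_strict_mono) simp_all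
  qed
  finally show ?thesis .
qed

lemma nO_eq: "in_O a \<Longrightarrow> in_O b \<Longrightarrow> nO a = nO b \<longleftrightarrow> cmod a = cmod b"
proof -
  assume "in_O a" "in_O b"
  then have "nO a = nO b \<longleftrightarrow> real (nO a) = real (nO b)" by simp
  also have "\<dots> \<longleftrightarrow> (cmod a)^2 = (cmod b)^2" using \<open>in_O a\<close> \<open>in_O b\<close> by (simp add: nO_real)
  also have "\<dots> \<longleftrightarrow> cmod a = cmod b" by (simp add: power2_eq_iff_nonneg)
  finally show ?thesis .
qed

lemma nO_0_iff: "nO z = 0 \<longleftrightarrow> (cmod z)^2 < 1"
  unfolding nO_def by linarith

lemma int_sq_ge1: assumes "(n::int) \<noteq> 0" shows "1 \<le> n^2"
proof -
  have "1 \<le> \<bar>n\<bar>" using assms by linarith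
  then have "1 \<le> \<bar>n\<bar>^2" by (rule one_le_power)
  then show ?thesis by simp
qed

lemma int_sq_lt4: assumes "(m::int)^2 < 4" shows "m \<in> {-1, 0, 1}"
proof -
  have "\<bar>m\<bar> < 2"
  proof (rule ccontr)
    assume "\<not> \<bar>m\<bar> < 2"
    then have "2 \<le> \<bar>m\<bar>" by simp
    then have "2^2 \<le> \<bar>m\<bar>^2" by (rule power_mono) simp
    then show False using assms by simp
  qed
  then show ?thesis by auto
qed

lemma unit_O: assumes "in_O a" "in_O e" "a * e = 1" shows "a = 1 \<or> a = -1"
proof -
  obtain m n :: int where a: "a = of_int m + of_int n * omega" and na: "(cmod a)^2 = of_int (m^2 + 2*n^2)"
    using in_O_norm[OF assms(1)] by blast
  obtain m' n' :: int where ne: "(cmod e)^2 = of_int (m'^2 + 2*n'^2)"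
    using in_O_norm[OF assms(2)] by blast
  have "cmod a * cmod e = 1" using assms(3) by (metis norm_mult norm_one)
  then have "(cmod a)^2 * (cmod e)^2 = 1" by (simp flip: power_mult_distrib)
  then have "of_int ((m^2 + 2*n^2) * (m'^2 + 2*n'^2)) = (1::real)" using na ne by simp
  then have X: "(m^2 + 2*n^2) * (m'^2 + 2*n'^2) = 1" by (simp only: of_int_eq_1_iff)
  have "m^2 + 2*n^2 \<ge> 0" by simp
  moreover have "m^2 + 2*n^2 \<noteq> 0" using X by auto
  ultimately have "m^2 + 2*n^2 > 0" by linarith
  then have X1: "m^2 + 2*n^2 = 1" using X pos_zmult_eq_1_iff by blast
  have n0: "n = 0"
  proof (rule ccontr)
    assume "n \<noteq> 0" then have "1 \<le> n^2" by (rule int_sq_ge1)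
    then show False using X1 by (smt (verit) zero_le_power2)
  qed
  then have "m^2 = 1" using X1 by simp
  then have "m = 1 \<or> m = -1" by (simp add: power2_eq_1_iff)
  then show ?thesis using a n0 by auto
qed

lemma small_O: assumes "in_O z" "cmod z < 2"
  shows "\<exists>m n :: int. z = of_int m + of_int n * omega \<and> m \<in> {-1, 0, 1} \<and> n \<in> {-1, 0, 1}"
proof -
  obtain m n :: int where a: "z = of_int m + of_int n * omega" and na: "(cmod z)^2 = of_int (m^2 + 2*n^2)"
    using in_O_norm[OF assms(1)] by blast
  have "(cmod z)^2 < 2^2" by (rule power_strict_mono) (use assms(2) in simp_all)
  then have "real_of_int (m^2 + 2*n^2) < 2^2" by (simp only: na[symmetric])
  also have "(2::real)^2 = real_of_int 4" by simp
  finally have "m^2 + 2*n^2 < 4" by (simp only: of_int_less_iff)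
  then have "m^2 < 4" "n^2 < 4" by (smt (verit) zero_le_power2)+
  then have "m \<in> {-1, 0, 1}" "n \<in> {-1, 0, 1}" using int_sq_lt4 by blast+
  then show ?thesis using a by blast
qed


lemma cmod_sq_expand: "(cmod z)^2 = Re z * Re z + Im z * Im z" using cmod_sq[of z] by (simp add: power2_eq_square)

lemma flag: fixes c v :: complex and e s :: real
  shows "(cmod c)^2 + (cmod (c + (of_real e + of_real s * omega) * v))^2 =
         (cmod (c + of_real e * v))^2 + (cmod (c + of_real s * omega * v))^2"
  unfolding cmod_sq_expand by (simp add: Re_omega Im_omega algebra_simps)

lemma u_norm: fixes w v :: complex and s :: real assumes "s * s = 1"
  shows "(cmod (omega * w - of_real s * v))^2 = (cmod w)^2 + (cmod (w + of_real s * omega * v))^2 - (cmod v)^2"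
proof -
  have ss: "s * (s * X) = X" for X using assms by (simp add: mult.assoc[symmetric])
  show ?thesis unfolding cmod_sq_expand
    by (simp add: Re_omega Im_omega algebra_simps ss)
qed

lemma G3_real: fixes A B N s :: real assumes "A^2 + B^2 = N^2" "N > 0" "s > 0" "s*s = 2"
  shows "2*N + 2*A < N \<or> 2*N - 2*A < N \<or> 3*N + 2*s*B < N \<or> 3*N - 2*s*B < N"
proof (cases "\<bar>A\<bar> > N/2")
  case True then show ?thesis by linarith
next
  case False
  then have "A^2 \<le> (N/2)^2" by (metis abs_le_square_iff not_less power2_abs abs_of_pos assms(2) half_gt_zero)
  then have B2: "B^2 \<ge> 3/4 * N^2" using assms(1) by (simp add: power_divide)
  have "(s*B)^2 = 2 * B^2" using assms(4) by (simp add: power_mult_distrib power2_eq_square)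
  moreover have "N^2 > 0" using assms(2) by simp
  ultimately have sb: "(s*B)^2 > N^2" using B2 by linarith
  have "\<bar>s*B\<bar> > N"
  proof (rule ccontr)
    assume "\<not> \<bar>s*B\<bar> > N" then have "\<bar>s*B\<bar> \<le> N" by simp
    then have "\<bar>s*B\<bar>^2 \<le> N^2" by (rule power_mono) simp
    then show False using sb by simp
  qed
  then show ?thesis by linarith
qed

lemma unit_circle: fixes w v :: complex assumes "cmod w = cmod v" "v \<noteq> 0"
  shows "cmod (w + v) < cmod v \<or> cmod (w - v) < cmod v \<or> cmod (w + omega * v) < cmod v \<or> cmod (w - omega * v) < cmod v"
proof -
  define x y X Y where "x = Re v" "y = Im v" "X = Re w" "Y = Im w"
  define N where "N = x*x + y*y"
  define A B where "A = X*x + Y*y" "B = Y*x - X*y"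
  have NN: "X*X + Y*Y = N" using assms(1) unfolding N_def x_y_X_Y_def
    by (metis cmod_sq_expand)
  have Npos: "N > 0" using assms(2) unfolding N_def x_y_X_Y_def
    by (metis cmod_sq_expand zero_less_norm_iff zero_less_power)
  have AB: "A^2 + B^2 = N^2"
  proof -
    have "A^2 + B^2 = (X*X + Y*Y) * (x*x + y*y)" unfolding A_B_def by (simp add: power2_eq_square algebra_simps)
    then show ?thesis using NN N_def by (simp add: power2_eq_square)
  qed
  have s: "sqrt 2 > (0::real)" "sqrt 2 * sqrt 2 = (2::real)" by simp_all
  have v2: "(cmod v)^2 = N" unfolding N_def x_y_X_Y_def cmod_sq_expand ..
  have e1: "(cmod (w + v))^2 = 2*N + 2*A" unfolding cmod_sq_expand A_B_def x_y_X_Y_def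
    using NN[unfolded x_y_X_Y_def] N_def[unfolded x_y_X_Y_def] by (simp add: algebra_simps)
  have e2: "(cmod (w - v))^2 = 2*N - 2*A" unfolding cmod_sq_expand A_B_def x_y_X_Y_def
    using NN[unfolded x_y_X_Y_def] N_def[unfolded x_y_X_Y_def] by (simp add: algebra_simps)
  have e3: "(cmod (w + omega * v))^2 = 3*N + 2*sqrt 2*B" unfolding cmod_sq_expand A_B_def x_y_X_Y_def
    using NN[unfolded x_y_X_Y_def] N_def[unfolded x_y_X_Y_def] by (simp add: algebra_simps Re_omega Im_omega)
  have e4: "(cmod (w - omega * v))^2 = 3*N - 2*sqrt 2*B" unfolding cmod_sq_expand A_B_def x_y_X_Y_def
    using NN[unfolded x_y_X_Y_def] N_def[unfolded x_y_X_Y_def] by (simp add: algebra_simps Re_omega Im_omega)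
  have lt: "cmod z < cmod v" if "(cmod z)^2 < (cmod v)^2" for z
    using that by (rule power_less_imp_less_base) simp
  from G3_real[OF AB Npos s] show ?thesis
    using lt e1 e2 e3 e4 v2 by auto
qed

lemma mu_small: fixes c v mu :: complex
  assumes "cmod (c + mu * v) < cmod v" "cmod c < cmod v"
  shows "cmod mu < 2"
proof -
  have "cmod (mu * v) = cmod ((c + mu * v) - c)" by simp
  also have "\<dots> \<le> cmod (c + mu * v) + cmod c" by (rule norm_triangle_ineq4)
  also have "\<dots> < 2 * cmod v" using assms by simp
  finally have "cmod mu * cmod v < 2 * cmod v" by (simp add: norm_mult)
  then show ?thesis by (metis mult_less_cancel_right norm_ge_zero not_less)
qed


definition ev :: "complex poly poly \<Rightarrow> complex \<Rightarrow> complex \<Rightarrow> complex" where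
  "ev X z w = poly (poly X [:w:]) z"

lemma ev_add[simp]: "ev (X + Y) z w = ev X z w + ev Y z w" by (simp add: ev_def)
lemma ev_mult[simp]: "ev (X * Y) z w = ev X z w * ev Y z w" by (simp add: ev_def)
lemma ev_power[simp]: "ev (X ^ n) z w = ev X z w ^ n" by (simp add: ev_def)
lemma ev_sum[simp]: "ev (sum f A) z w = (\<Sum>x\<in>A. ev (f x) z w)" by (simp add: ev_def poly_sum)
lemma ev_0[simp]: "ev 0 z w = 0" by (simp add: ev_def)
lemma ev_const[simp]: "ev [:[:c:]:] z w = c" by (simp add: ev_def)
lemma ev_lin1[simp]: "ev [:[:b, a:]:] z w = b + a * z" by (simp add: ev_def mult.commute)
lemma ev_lin2[simp]: "ev [:[:b:], [:a:]:] z w = b + a * w" by (simp add: ev_def mult.commute)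
lemma ev_uminus[simp]: "ev (- X) z w = - ev X z w" by (simp add: ev_def)
lemma ev_diff[simp]: "ev (X - Y) z w = ev X z w - ev Y z w" by (simp add: ev_def)
lemma ev_smult[simp]: "ev (smult [:c:] X) z w = c * ev X z w" by (simp add: ev_def)

lemma poly_le_sum: fixes p :: "'a::comm_semiring_1 poly" assumes "degree p \<le> n" shows "poly p x = (\<Sum>i\<le>n. coeff p i * x ^ i)"
proof -
  have "(\<Sum>i\<le>degree p. coeff p i * x ^ i) = (\<Sum>i\<le>n. coeff p i * x ^ i)"
    by (rule sum.mono_neutral_left) (use assms in \<open>auto simp: coeff_eq_0\<close>)
  then show ?thesis by (simp add: poly_altdef)
qed

lemma ev_alt: "ev X z w = poly (map_poly (\<lambda>q. poly q z) X) w"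
proof -
  have "ev X z w = (\<Sum>j\<le>degree X. poly (coeff X j) z * w ^ j)"
    unfolding ev_def poly_altdef[of X] by (simp add: poly_sum)
  also have "\<dots> = poly (map_poly (\<lambda>q. poly q z) X) w"
    by (subst poly_le_sum[OF map_poly_degree_leq]) (simp add: coeff_map_poly)
  finally show ?thesis .
qed

lemma ev_zero_generic:
  assumes A: "finite A" and B: "finite B" and h: "\<And>z w. z \<notin> A \<Longrightarrow> w \<notin> B \<Longrightarrow> ev X z w = 0"
  shows "X = 0"
proof -
  have inf: "infinite (- C)" if "finite C" for C :: "complex set"
    using that infinite_UNIV_char_0 by (metis Compl_eq_Diff_UNIV finite_Diff2 infinite_UNIV_char_0)
  have 1: "map_poly (\<lambda>q. poly q z) X = 0" if z: "z \<notin> A" for z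
  proof (rule ccontr)
    assume ne: "map_poly (\<lambda>q. poly q z) X \<noteq> 0"
    have "- B \<subseteq> {w. poly (map_poly (\<lambda>q. poly q z) X) w = 0}"
      using h[OF z] by (auto simp: ev_alt)
    with poly_roots_finite[OF ne] inf[OF B] show False using finite_subset by blast
  qed
  have 2: "coeff X j = 0" for j
  proof (rule ccontr)
    assume ne: "coeff X j \<noteq> 0"
    have "- A \<subseteq> {z. poly (coeff X j) z = 0}"
    proof
      fix z assume "z \<in> - A"
      then have "coeff (map_poly (\<lambda>q. poly q z) X) j = 0" using 1 by simp
      then show "z \<in> {z. poly (coeff X j) z = 0}" by (simp add: coeff_map_poly)
    qed
    with poly_roots_finite[OF ne] inf[OF A] show False using finite_subset by blast
  qed
  then show ?thesis by (simp add: poly_eq_iff)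
qed

lemma ev_inj: assumes "\<And>z w. ev X z w = ev Y z w" shows "X = Y"
proof -
  have "X - Y = 0" by (rule ev_zero_generic[of "{}" "{}"]) (simp_all add: assms)
  then show ?thesis by simp
qed

definition H :: "nat \<Rightarrow> complex poly poly \<Rightarrow> complex \<Rightarrow> complex \<Rightarrow> complex \<Rightarrow> complex \<Rightarrow> complex" where
  "H k P z1 z2 w1 w2 = (\<Sum>i\<le>k. \<Sum>j\<le>k. coeff (coeff P j) i * z1 ^ i * z2 ^ (k - i) * w1 ^ j * w2 ^ (k - j))"

lemma ev_slash: "ev (slash k P (a, b, c, e)) z w =
   H k P (a * z + b) (c * z + e) (cnj a * w + cnj b) (cnj c * w + cnj e)"
  unfolding slash_def H_def by (simp add: ac_simps)

lemma H_hom: "H k P (t * x1) (t * x2) (s * y1) (s * y2) = t ^ k * s ^ k * H k P x1 x2 y1 y2"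
  unfolding H_def sum_distrib_left
proof (intro sum.cong refl)
  fix i j assume i: "i \<in> {..k}" and j: "j \<in> {..k}"
  have "t ^ i * t ^ (k - i) = t ^ k" using i by (simp flip: power_add)
  moreover have "s ^ j * s ^ (k - j) = s ^ k" using j by (simp flip: power_add)
  ultimately show "coeff (coeff P j) i * (t * x1) ^ i * (t * x2) ^ (k - i) * (s * y1) ^ j * (s * y2) ^ (k - j) =
     t ^ k * s ^ k * (coeff (coeff P j) i * x1 ^ i * x2 ^ (k - i) * y1 ^ j * y2 ^ (k - j))"
  proof -
    have "coeff (coeff P j) i * (t * x1) ^ i * (t * x2) ^ (k - i) * (s * y1) ^ j * (s * y2) ^ (k - j) =
      (coeff (coeff P j) i * x1 ^ i * x2 ^ (k - i) * y1 ^ j * y2 ^ (k - j)) * (t ^ i * t ^ (k - i)) * (s ^ j * s ^ (k - j))"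
      by (simp add: power_mult_distrib ac_simps)
    also have "\<dots> = t ^ k * s ^ k * (coeff (coeff P j) i * x1 ^ i * x2 ^ (k - i) * y1 ^ j * y2 ^ (k - j))"
      unfolding \<open>t ^ i * t ^ (k - i) = t ^ k\<close> \<open>s ^ j * s ^ (k - j) = s ^ k\<close> by (simp add: ac_simps)
    finally show ?thesis .
  qed
qed

lemma ev_Vkk: assumes "P \<in> Vkk k" shows "ev P z w = H k P z 1 w 1"
proof -
  have dP: "degree P \<le> k" and dc: "\<And>j. degree (coeff P j) \<le> k" using assms by (auto simp: Vkk_def)
  have "ev P z w = (\<Sum>j\<le>k. poly (coeff P j) z * w ^ j)"
    unfolding ev_def poly_le_sum[OF dP, of "[:w:]"] by (simp add: poly_sum)
  also have "\<dots> = (\<Sum>j\<le>k. \<Sum>i\<le>k. coeff (coeff P j) i * z ^ i * w ^ j)"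
    by (simp add: poly_le_sum[OF dc] sum_distrib_right)
  also have "\<dots> = H k P z 1 w 1" unfolding H_def by (subst sum.swap) simp
  finally show ?thesis .
qed

lemma H_scale: assumes "P \<in> Vkk k" "z2 \<noteq> 0" "w2 \<noteq> 0"
  shows "H k P z1 z2 w1 w2 = z2 ^ k * w2 ^ k * ev P (z1 / z2) (w1 / w2)"
  using H_hom[of k P z2 "z1/z2" 1 w2 "w1/w2" 1] assms by (simp add: ev_Vkk)

definition Vd :: "nat \<Rightarrow> nat \<Rightarrow> complex poly poly set" where
  "Vd m n = {P. degree P \<le> n \<and> (\<forall>j. degree (coeff P j) \<le> m)}"

lemma Vd_mult: assumes "P \<in> Vd m n" "Q \<in> Vd m' n'" shows "P * Q \<in> Vd (m + m') (n + n')"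
proof -
  have dP: "degree P \<le> n" "\<And>j. degree (coeff P j) \<le> m" and dQ: "degree Q \<le> n'" "\<And>j. degree (coeff Q j) \<le> m'"
    using assms by (auto simp: Vd_def)
  have "degree (P * Q) \<le> n + n'" using dP dQ degree_mult_le[of P Q] by linarith
  moreover have "degree (coeff (P * Q) j) \<le> m + m'" for j
    unfolding coeff_mult
  proof (rule degree_sum_le)
    fix i
    have "degree (coeff P i * coeff Q (j - i)) \<le> degree (coeff P i) + degree (coeff Q (j - i))"
      by (rule degree_mult_le)
    also have "\<dots> \<le> m + m'" using dP(2)[of i] dQ(2)[of "j - i"] by linarith
    finally show "degree (coeff P i * coeff Q (j - i)) \<le> m + m'" .
  qed simp
  ultimately show ?thesis by (simp add: Vd_def)
qed

lemma Vd_power: "P \<in> Vd m n \<Longrightarrow> P ^ r \<in> Vd (m * r) (n * r)"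
proof (induction r)
  case 0 then show ?case by (simp add: Vd_def coeff_1 )
next
  case (Suc r) then show ?case using Vd_mult[of P m n "P^r" "m*r" "n*r"] by (simp add: add.commute)
qed

lemma Vd_mono: "P \<in> Vd m n \<Longrightarrow> m \<le> m' \<Longrightarrow> n \<le> n' \<Longrightarrow> P \<in> Vd m' n'"
  by (auto simp: Vd_def intro: order_trans)

lemma Vd_add: "P \<in> Vd m n \<Longrightarrow> Q \<in> Vd m n \<Longrightarrow> P + Q \<in> Vd m n"
  by (auto simp: Vd_def intro: degree_add_le)

lemma Vd_sum: "finite A \<Longrightarrow> (\<And>x. x \<in> A \<Longrightarrow> f x \<in> Vd m n) \<Longrightarrow> sum f A \<in> Vd m n"
  by (induction A rule: finite_induct) (auto simp: Vd_add, simp add: Vd_def)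

lemma Vd_const: "[:[:c:]:] \<in> Vd 0 0" by (simp add: Vd_def coeff_pCons split: nat.splits)
lemma Vd_lin1: "[:[:b, a:]:] \<in> Vd 1 0" by (simp add: Vd_def coeff_pCons split: nat.splits)
lemma Vd_lin2: "[:[:b:], [:a:]:] \<in> Vd 0 1" by (auto simp: Vd_def coeff_pCons split: nat.splits)

lemma Vkk_Vd: "Vkk k = Vd k k" by (simp add: Vkk_def Vd_def)

lemma slash_Vkk: "slash k P M \<in> Vkk k"
proof -
  obtain a b c e where M: "M = (a, b, c, e)" by (cases M) auto
  have "(\<Sum>i\<le>k. \<Sum>j\<le>k. [:[:coeff (coeff P j) i:]:] * [:[:b, a:]:] ^ i * [:[:e, c:]:] ^ (k - i) *
        [:[:cnj b:], [:cnj a:]:] ^ j * [:[:cnj e:], [:cnj c:]:] ^ (k - j)) \<in> Vd k k"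
  proof (intro Vd_sum finite_atMost)
    fix i j assume i: "i \<in> {..k}" and j: "j \<in> {..k}"
    let ?X = "[:[:coeff (coeff P j) i:]:] * [:[:b, a:]:] ^ i * [:[:e, c:]:] ^ (k - i) *
        [:[:cnj b:], [:cnj a:]:] ^ j * [:[:cnj e:], [:cnj c:]:] ^ (k - j)"
    have "?X \<in> Vd (0 + 1 * i + 1 * (k - i) + 0 * j + 0 * (k - j)) (0 + 0 * i + 0 * (k - i) + 1 * j + 1 * (k - j))"
      by (intro Vd_mult Vd_power Vd_const Vd_lin1 Vd_lin2)
    moreover have "0 + 1 * i + 1 * (k - i) + 0 * j + 0 * (k - j) = k" "0 + 0 * i + 0 * (k - i) + 1 * j + 1 * (k - j) = k"
      using i j by auto
    ultimately show "?X \<in> Vd k k" by simp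
  qed
  then show ?thesis unfolding M slash_def Vkk_Vd by simp
qed

lemma H_slash: assumes "z2 \<noteq> 0" "w2 \<noteq> 0"
  shows "H k (slash k P (a, b, c, e)) z1 z2 w1 w2 =
    H k P (a * z1 + b * z2) (c * z1 + e * z2) (cnj a * w1 + cnj b * w2) (cnj c * w1 + cnj e * w2)"
proof -
  have "H k (slash k P (a, b, c, e)) z1 z2 w1 w2 = z2 ^ k * w2 ^ k *
     H k P (a * (z1/z2) + b) (c * (z1/z2) + e) (cnj a * (w1/w2) + cnj b) (cnj c * (w1/w2) + cnj e)"
    using assms by (simp add: H_scale slash_Vkk ev_slash)
  also have "\<dots> = H k P (z2 * (a * (z1/z2) + b)) (z2 * (c * (z1/z2) + e)) (w2 * (cnj a * (w1/w2) + cnj b)) (w2 * (cnj c * (w1/w2) + cnj e))"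
    by (simp add: H_hom)
  also have "\<dots> = H k P (a * z1 + b * z2) (c * z1 + e * z2) (cnj a * w1 + cnj b * w2) (cnj c * w1 + cnj e * w2)"
  proof -
    have "z2 * (a * (z1/z2) + b) = a * z1 + b * z2" "z2 * (c * (z1/z2) + e) = c * z1 + e * z2"
      "w2 * (cnj a * (w1/w2) + cnj b) = cnj a * w1 + cnj b * w2" "w2 * (cnj c * (w1/w2) + cnj e) = cnj c * w1 + cnj e * w2"
      using assms by (simp_all add: field_simps)
    then show ?thesis by simp
  qed
  finally show ?thesis .
qed

lemma finite_lin_zero: assumes "c \<noteq> 0 \<or> e \<noteq> 0" shows "finite {z::complex. c * z + e = 0}"
proof (cases "c = 0")
  case True then show ?thesis using assms by simp
next
  case False
  have "z = - e / c" if "c * z + e = 0" for z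
  proof -
    from that have "c * z = - e" by (simp add: eq_neg_iff_add_eq_0)
    have "z = (c * z) / c" using False by simp
    also have "\<dots> = - e / c" using \<open>c * z = - e\<close> by simp
    finally show ?thesis .
  qed
  then have "{z. c * z + e = 0} \<subseteq> {- e / c}" by auto
  then show ?thesis using finite_subset by blast
qed

lemma slash_comp: assumes "mdet N \<noteq> 0"
  shows "slash k (slash k P M) N = slash k P (mmul M N)"
proof -
  obtain a b c e where M: "M = (a, b, c, e)" by (cases M) auto
  obtain a' b' c' e' where N: "N = (a', b', c', e')" by (cases N) auto
  have ce: "c' \<noteq> 0 \<or> e' \<noteq> 0" using assms N by auto
  have ce': "cnj c' \<noteq> 0 \<or> cnj e' \<noteq> 0" using ce by auto
  have "slash k (slash k P M) N - slash k P (mmul M N) = 0"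
  proof (rule ev_zero_generic[OF finite_lin_zero[OF ce] finite_lin_zero[OF ce']])
    fix z w assume z: "z \<notin> {z. c' * z + e' = 0}" and w: "w \<notin> {w. cnj c' * w + cnj e' = 0}"
    show "ev (slash k (slash k P M) N - slash k P (mmul M N)) z w = 0"
    proof -
      have nz: "c' * z + e' \<noteq> 0" "cnj c' * w + cnj e' \<noteq> 0" using z w by auto
      have 1: "ev (slash k (slash k P M) N) z w = H k P (a * (a' * z + b') + b * (c' * z + e'))
          (c * (a' * z + b') + e * (c' * z + e')) (cnj a * (cnj a' * w + cnj b') + cnj b * (cnj c' * w + cnj e'))
          (cnj c * (cnj a' * w + cnj b') + cnj e * (cnj c' * w + cnj e'))"
        unfolding M N ev_slash H_slash[OF nz] ..
      have 2: "ev (slash k P (mmul M N)) z w = H k P ((a * a' + b * c') * z + (a * b' + b * e'))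
          ((c * a' + e * c') * z + (c * b' + e * e')) (cnj (a * a' + b * c') * w + cnj (a * b' + b * e'))
          (cnj (c * a' + e * c') * w + cnj (c * b' + e * e'))"
        unfolding M N mmul.simps ev_slash ..
      have 3: "a * (a' * z + b') + b * (c' * z + e') = (a * a' + b * c') * z + (a * b' + b * e')"
        "c * (a' * z + b') + e * (c' * z + e') = (c * a' + e * c') * z + (c * b' + e * e')"
        "cnj a * (cnj a' * w + cnj b') + cnj b * (cnj c' * w + cnj e') = cnj (a * a' + b * c') * w + cnj (a * b' + b * e')"
        "cnj c * (cnj a' * w + cnj b') + cnj e * (cnj c' * w + cnj e') = cnj (c * a' + e * c') * w + cnj (c * b' + e * e')"
        by (simp_all add: algebra_simps)
      show ?thesis unfolding ev_diff 1 2 3 by simp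
    qed
  qed
  then show ?thesis by simp
qed

lemma slash_id: assumes "P \<in> Vkk k" shows "slash k P (1, 0, 0, 1) = P"
  by (rule ev_inj) (simp add: ev_slash ev_Vkk[OF assms])

lemma slash_neg: "slash k P (mneg M) = slash k P M"
proof -
  obtain a b c e where M: "M = (a, b, c, e)" by (cases M) auto
  show ?thesis
  proof (rule ev_inj)
    fix z w
    have "ev (slash k P (mneg M)) z w = H k P ((-1) * (a * z + b)) ((-1) * (c * z + e)) ((-1) * (cnj a * w + cnj b)) ((-1) * (cnj c * w + cnj e))"
      unfolding M by (simp add: ev_slash algebra_simps)
    also have "\<dots> = ev (slash k P M) z w" unfolding H_hom M ev_slash
      by (simp flip: power_mult_distrib)
    finally show "ev (slash k P (mneg M)) z w = ev (slash k P M) z w" .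
  qed
qed

lemma H_add: "H k (P + Q) z1 z2 w1 w2 = H k P z1 z2 w1 w2 + H k Q z1 z2 w1 w2"
  unfolding H_def by (simp add: algebra_simps sum.distrib)
lemma H_smult: "H k (smult [:c:] P) z1 z2 w1 w2 = c * H k P z1 z2 w1 w2"
  unfolding H_def by (simp add: algebra_simps sum_distrib_left)
lemma H_0: "H k 0 z1 z2 w1 w2 = 0" unfolding H_def by simp
lemma H_uminus: "H k (- P) z1 z2 w1 w2 = - H k P z1 z2 w1 w2"
  unfolding H_def by (simp add: sum_negf)
lemma H_diff: "H k (P - Q) z1 z2 w1 w2 = H k P z1 z2 w1 w2 - H k Q z1 z2 w1 w2"
  using H_add[of k P "-Q"] H_uminus[of k Q] by simp

lemma slash_add: "slash k (P + Q) M = slash k P M + slash k Q M"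
  by (rule ev_inj, cases M) (simp add: ev_slash H_add)
lemma slash_smult: "slash k (smult [:c:] P) M = smult [:c:] (slash k P M)"
  by (rule ev_inj, cases M) (simp add: ev_slash H_smult)
lemma slash_0: "slash k 0 M = 0"
  by (rule ev_inj, cases M) (simp add: ev_slash H_0)
lemma slash_uminus: "slash k (- P) M = - slash k P M"
  by (rule ev_inj, cases M) (simp add: ev_slash H_uminus)
lemma slash_diff: "slash k (P - Q) M = slash k P M - slash k Q M"
  by (rule ev_inj, cases M) (simp add: ev_slash H_diff)


type_synonym row = "complex \<times> complex"

definition dt :: "row \<Rightarrow> row \<Rightarrow> complex" where "dt w v = fst w * snd v - snd w * fst v"
definition inO2 :: "row \<Rightarrow> bool" where "inO2 v \<longleftrightarrow> in_O (fst v) \<and> in_O (snd v)"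
definition adj :: "row \<Rightarrow> row \<Rightarrow> bool" where
  "adj v w \<longleftrightarrow> inO2 v \<and> inO2 w \<and> (dt w v = 1 \<or> dt w v = -1)"
definition om :: "nat \<Rightarrow> complex poly poly \<Rightarrow> row \<Rightarrow> row \<Rightarrow> complex poly poly" where
  "om k P v w = slash k P (fst v, snd v, - dt w v * fst w, - dt w v * snd w)"
definition rl :: "complex \<Rightarrow> row \<Rightarrow> complex \<Rightarrow> row \<Rightarrow> row" where
  "rl a x b y = (a * fst x + b * fst y, a * snd x + b * snd y)"
definition rneg :: "row \<Rightarrow> row" where "rneg v = (- fst v, - snd v)"
definition rmul :: "row \<Rightarrow> mat2 \<Rightarrow> row" where
  "rmul v M = (case M of (a, b, c, e) \<Rightarrow> (fst v * a + snd v * c, fst v * b + snd v * e))"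

lemma omega_sq': "omega * (omega * x) = -2 * x" using omega_sq by (simp add: mult.assoc[symmetric])

lemma dt_anti: "dt v w = - dt w v" by (simp add: dt_def)
lemma dt_self: "dt v v = 0" by (simp add: dt_def)
lemma dt_rl: "dt (rl a x b y) v = a * dt x v + b * dt y v" by (simp add: dt_def rl_def algebra_simps)
lemma dt_rl2: "dt w (rl a x b y) = a * dt w x + b * dt w y" by (simp add: dt_def rl_def algebra_simps)
lemma dt_rneg1: "dt (rneg w) v = - dt w v" and dt_rneg2: "dt w (rneg v) = - dt w v"
  by (simp_all add: dt_def rneg_def)

lemma inO2_rl: "in_O a \<Longrightarrow> in_O b \<Longrightarrow> inO2 x \<Longrightarrow> inO2 y \<Longrightarrow> inO2 (rl a x b y)"
  by (simp add: inO2_def rl_def in_O_add in_O_mult)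
lemma inO2_rneg: "inO2 (rneg v) = inO2 v"
  by (simp add: inO2_def rneg_def) (metis in_O_uminus minus_minus)

lemma adj_sym: "adj v w \<Longrightarrow> adj w v"
  unfolding adj_def using dt_anti[of v w] by (auto simp: minus_equation_iff equation_minus_iff)

lemma adj_rneg1: "adj (rneg v) w = adj v w" and adj_rneg2: "adj v (rneg w) = adj w v"
  unfolding adj_def inO2_rneg dt_rneg1 dt_rneg2 using dt_anti[of v w] by (auto simp: minus_equation_iff equation_minus_iff)

lemma om_negL: "om k P (rneg v) w = om k P v w"
proof -
  have "(fst (rneg v), snd (rneg v), - dt w (rneg v) * fst w, - dt w (rneg v) * snd w) =
     mneg (fst v, snd v, - dt w v * fst w, - dt w v * snd w)"
    by (simp add: rneg_def dt_def algebra_simps)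
  then show ?thesis unfolding om_def by (simp only: slash_neg)
qed

lemma om_negR: "om k P v (rneg w) = om k P v w"
  by (simp add: om_def rneg_def dt_def algebra_simps)

lemma mmul_id: "mmul (1, 0, 0, 1) M = M"
  by (cases M) simp

lemma om_anti:
  assumes W1: "P + slash k P matS = 0" and d: "dt w v = 1 \<or> dt w v = -1"
  shows "om k P w v = - om k P v w"
proof -
  define d where "d = dt w v"
  have dd: "d * d = 1" using d d_def by auto
  define M where "M = (fst v, snd v, - d * fst w, - d * snd w)"
  define X where "X = ((0::complex), - d, d, (0::complex))"
  have detM: "mdet M = 1" unfolding M_def using dd by (simp add: d_def dt_def algebra_simps)
  have "mmul X M = (fst w, snd w, - dt v w * fst v, - dt v w * snd v)"
    unfolding X_def M_def using dd by (simp add: dt_anti[of v w] d_def[symmetric] mult.assoc[symmetric])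
  then have "om k P w v = slash k P (mmul X M)" by (simp add: om_def)
  also have "\<dots> = slash k (slash k P X) M" using detM by (simp add: slash_comp)
  also have "slash k P X = - P"
  proof -
    have "X = matS \<or> X = mneg matS" using d unfolding X_def d_def matS_def by auto
    then have "slash k P X = slash k P matS"
    proof
      assume "X = mneg matS" then show ?thesis by (simp only: slash_neg)
    qed simp
    then show ?thesis using W1 by (simp add: eq_neg_iff_add_eq_0 add.commute)
  qed
  also have "slash k (- P) M = - om k P v w" by (simp add: slash_uminus om_def M_def d_def)
  finally show ?thesis .
qed

lemma rmul_dt: "dt (rmul w Y) (rmul v Y) = dt w v * mdet Y"
  by (cases Y) (simp add: rmul_def dt_def algebra_simps)

lemma om_equiv: assumes "mdet Y = 1"
  shows "om k P (rmul v Y) (rmul w Y) = slash k (om k P v w) Y"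
proof -
  obtain a b c e where Y: "Y = (a, b, c, e)" by (cases Y) auto
  have "om k P (rmul v Y) (rmul w Y) = slash k P (mmul (fst v, snd v, - dt w v * fst w, - dt w v * snd w) Y)"
    unfolding om_def rmul_dt assms by (simp add: Y rmul_def algebra_simps)
  also have "\<dots> = slash k (om k P v w) Y" using assms by (simp add: slash_comp om_def)
  finally show ?thesis .
qed

lemma adj_rmul: assumes "adj v w" "in_O a" "in_O b" "in_O c" "in_O e" "mdet (a, b, c, e) = 1"
  shows "adj (rmul v (a, b, c, e)) (rmul w (a, b, c, e))"
  using assms rmul_dt[of w "(a,b,c,e)" v]
  by (auto simp: adj_def inO2_def rmul_def in_O_add in_O_mult simp del: mdet.simps)


locale rels =
  fixes k :: nat and P :: "complex poly poly"
  assumes W1: "P + slash k P matS = 0"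
    and W2: "P + slash k P matU + slash k P (mmul matU matU) = 0"
    and W3: "P + slash k P (mmul matS matTw) + slash k P (mmul matTw matS)
       + slash k P (mmul (mmul (mmul matTwinv matS) matTw) matS) = 0"
begin

lemma anti: "dt w v = 1 \<or> dt w v = -1 \<Longrightarrow> om k P w v = - om k P v w"
  by (rule om_anti[OF W1])

lemma dt_pm_anti: "dt w v = 1 \<or> dt w v = -1 \<Longrightarrow> dt v w = 1 \<or> dt v w = -1"
  using dt_anti[of v w] by (auto simp: minus_equation_iff equation_minus_iff)

lemma anti_adj: "adj v w \<Longrightarrow> om k P w v = - om k P v w"
  unfolding adj_def by (rule anti) auto

lemma o_S: "om k P (0, 1) (1, 0) = slash k P matS"
proof -
  have "om k P (0, 1) (1, 0) = slash k P (mneg matS)" by (simp add: om_def dt_def matS_def)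
  then show ?thesis by (simp only: slash_neg)
qed

lemma tri_base: "om k P (0, 1) (1, 0) + om k P (1, 0) (1, 1) + om k P (1, 1) (0, 1) = 0"
proof -
  have o2: "om k P (1, 0) (1, 1) = slash k P (mmul matU matT)"
    by (simp add: om_def dt_def matU_def matT_def matS_def)
  have o3: "om k P (1, 1) (0, 1) = slash k P matT"
    by (simp add: om_def dt_def matT_def)
  have U3: "mmul (mmul matU matU) matT = matS" by (simp add: matU_def matT_def matS_def)
  have dT: "mdet matT \<noteq> 0" by (simp add: matT_def)
  have "slash k (P + slash k P matU + slash k P (mmul matU matU)) matT = 0" using W2 by (simp add: slash_0)
  then have "slash k P matT + slash k P (mmul matU matT) + slash k P (mmul (mmul matU matU) matT) = 0"
    by (simp only: slash_add slash_comp[OF dT])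
  then show ?thesis unfolding o_S o2 o3 U3 by (simp add: ac_simps)
qed

lemma quad_base: "om k P (0, 1) (1, 0) + om k P (1, 0) (omega, -1) + om k P (omega, -1) (1, omega) + om k P (1, omega) (0, 1) = 0"
proof -
  have o2: "om k P (1, 0) (omega, -1) = slash k P (mmul (mmul matS matTw) matS)"
  proof -
    have "om k P (1, 0) (omega, -1) = slash k P (1, 0, -omega, 1)" by (simp add: om_def dt_def)
    moreover have "mmul (mmul matS matTw) matS = mneg (1, 0, -omega, 1)" by (simp add: matS_def matTw_def)
    ultimately show ?thesis by (simp only: slash_neg)
  qed
  have o3: "om k P (omega, -1) (1, omega) = slash k P (mmul (mmul (mmul (mmul matTwinv matS) matTw) matS) matS)"
  proof -
    have "om k P (omega, -1) (1, omega) = slash k P (omega, -1, -1, -omega)" by (simp add: om_def dt_def omega_sq)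
    moreover have "mmul (mmul (mmul (mmul matTwinv matS) matTw) matS) matS = (omega, -1, -1, -omega)"
      by (simp add: matS_def matTw_def matTwinv_def omega_sq)
    ultimately show ?thesis by simp
  qed
  have o4: "om k P (1, omega) (0, 1) = slash k P (mmul (mmul matTw matS) matS)"
  proof -
    have "om k P (1, omega) (0, 1) = slash k P (1, omega, 0, 1)" by (simp add: om_def dt_def)
    moreover have "mmul (mmul matTw matS) matS = mneg (1, omega, 0, 1)" by (simp add: matS_def matTw_def)
    ultimately show ?thesis by (simp only: slash_neg)
  qed
  have dS: "mdet matS \<noteq> 0" by (simp add: matS_def)
  have "slash k (P + slash k P (mmul matS matTw) + slash k P (mmul matTw matS)
       + slash k P (mmul (mmul (mmul matTwinv matS) matTw) matS)) matS = 0" using W3 by (simp add: slash_0)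
  then have "slash k P matS + slash k P (mmul (mmul matS matTw) matS) + slash k P (mmul (mmul matTw matS) matS)
       + slash k P (mmul (mmul (mmul (mmul matTwinv matS) matTw) matS) matS) = 0"
    by (simp only: slash_add slash_comp[OF dS])
  then show ?thesis unfolding o_S o2 o3 o4 by (simp add: ac_simps)
qed

lemma transl:
  assumes d: "dt (w1, w2) (v1, v2) = 1"
  shows "om k P (rmul x (w1, w2, v1, v2)) (rmul y (w1, w2, v1, v2))
       = slash k (om k P x y) (w1, w2, v1, v2)"
  by (rule om_equiv) (use d in \<open>simp add: dt_def\<close>)

lemma rm01: "rmul (0, 1) (w1, w2, v1, v2) = (v1, v2)"
  and rm10: "rmul (1, 0) (w1, w2, v1, v2) = (w1, w2)"
  and rm11: "rmul (1, 1) (w1, w2, v1, v2) = rl 1 (w1, w2) 1 (v1, v2)"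
  and rmom: "rmul (omega, -1) (w1, w2, v1, v2) = rl omega (w1, w2) (-1) (v1, v2)"
  and rm1om: "rmul (1, omega) (w1, w2, v1, v2) = rl 1 (w1, w2) omega (v1, v2)"
  by (simp_all add: rmul_def rl_def)

lemma tri1: assumes d: "dt w v = 1"
  shows "om k P v w + om k P w (rl 1 w 1 v) + om k P (rl 1 w 1 v) v = 0"
proof -
  obtain v1 v2 w1 w2 where v: "v = (v1, v2)" and w: "w = (w1, w2)" by (cases v, cases w) auto
  have d': "dt (w1, w2) (v1, v2) = 1" using d v w by simp
  have "om k P v w + om k P w (rl 1 w 1 v) + om k P (rl 1 w 1 v) v =
     slash k (om k P (0, 1) (1, 0) + om k P (1, 0) (1, 1) + om k P (1, 1) (0, 1)) (w1, w2, v1, v2)"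
    unfolding slash_add transl[OF d', symmetric] rm01 rm10 rm11 v w ..
  then show ?thesis by (simp add: tri_base slash_0)
qed

lemma quad1: assumes d: "dt w v = 1"
  shows "om k P v w + om k P w (rl omega w (-1) v) + om k P (rl omega w (-1) v) (rl 1 w omega v) + om k P (rl 1 w omega v) v = 0"
proof -
  obtain v1 v2 w1 w2 where v: "v = (v1, v2)" and w: "w = (w1, w2)" by (cases v, cases w) auto
  have d': "dt (w1, w2) (v1, v2) = 1" using d v w by simp
  have "om k P v w + om k P w (rl omega w (-1) v) + om k P (rl omega w (-1) v) (rl 1 w omega v) + om k P (rl 1 w omega v) v =
     slash k (om k P (0, 1) (1, 0) + om k P (1, 0) (omega, -1) + om k P (omega, -1) (1, omega) + om k P (1, omega) (0, 1)) (w1, w2, v1, v2)"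
    unfolding slash_add transl[OF d', symmetric] rm01 rm10 rmom rm1om v w ..
  then show ?thesis by (simp add: quad_base slash_0)
qed

lemma tri_pos: assumes d: "dt w v = 1" and e: "e = 1 \<or> e = -1"
  shows "om k P v w + om k P w (rl 1 w e v) + om k P (rl 1 w e v) v = 0"
  using e
proof
  assume "e = 1" then show ?thesis using tri1[OF d] by simp
next
  assume e: "e = -1"
  define w' where "w' = rl 1 w (-1) v"
  have d': "dt w' v = 1" using d by (simp add: w'_def dt_rl dt_self)
  have ww: "rl 1 w' 1 v = w" by (simp add: w'_def rl_def)
  have "om k P v w' + om k P w' w + om k P w v = 0" using tri1[OF d'] ww by simp
  moreover have "om k P w' w = - om k P w w'"
    by (rule anti) (simp add: w'_def dt_rl dt_self dt_anti[of v w] d)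
  moreover have "om k P w v = - om k P v w" by (rule anti) (simp add: d)
  moreover have "om k P v w' = - om k P w' v" by (rule anti) (simp add: dt_anti[of v w'] d')
  ultimately have "- (om k P v w + om k P w w' + om k P w' v) = 0" by (simp add: algebra_simps)
  then have X: "om k P v w + om k P w w' + om k P w' v = 0" by (simp only: neg_equal_0_iff_equal)
  show ?thesis unfolding e w'_def[symmetric] using X .
qed

lemma tri: assumes a: "adj v w" and e: "e = 1 \<or> e = -1"
  shows "om k P v w + om k P w (rl 1 w e v) + om k P (rl 1 w e v) v = 0"
proof -
  have "dt w v = 1 \<or> dt w v = -1" using a adj_def by auto
  then show ?thesis
  proof
    assume "dt w v = 1" then show ?thesis using tri_pos e by blast
  next
    assume d: "dt w v = -1"
    have d': "dt w (rneg v) = 1" using d by (simp add: dt_rneg2)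
    have e': "- e = 1 \<or> - e = -1" using e by auto
    have r: "rl 1 w (- e) (rneg v) = rl 1 w e v" by (simp add: rl_def rneg_def)
    show ?thesis using tri_pos[OF d' e'] unfolding r om_negL om_negR .
  qed
qed

lemma quad_pos: assumes d: "dt w v = 1" and s: "s = 1 \<or> s = -1"
  shows "om k P v w + om k P w (rl omega w (- s) v) + om k P (rl omega w (- s) v) (rl 1 w (s * omega) v)
     + om k P (rl 1 w (s * omega) v) v = 0"
  using s
proof
  assume "s = 1" then show ?thesis using quad1[OF d] by simp
next
  assume s: "s = -1"
  define w' where "w' = rl 1 w (- omega) v"
  define u where "u = rl omega w 1 v"
  have d': "dt w' v = 1" using d by (simp add: w'_def dt_rl dt_self)
  have ww: "rl 1 w' omega v = w" by (simp add: w'_def rl_def)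
  have uu: "rl omega w' (-1) v = u" by (simp add: w'_def u_def rl_def algebra_simps omega_sq')
  have q: "om k P v w' + om k P w' u + om k P u w + om k P w v = 0" using quad1[OF d'] ww uu by simp
  have dwu: "dt w u = 1 \<or> dt w u = -1" by (simp add: u_def dt_rl2 dt_self d)
  have duw: "dt u w' = 1 \<or> dt u w' = -1"
    by (simp add: u_def w'_def dt_rl2 dt_rl dt_self d dt_anti[of v w] algebra_simps omega_sq' omega_sq)
  have "om k P w' u = - om k P u w'" by (rule anti) (rule dt_pm_anti[OF duw])
  moreover have "om k P u w = - om k P w u" by (rule anti) (rule dt_pm_anti[OF dwu])
  moreover have "om k P w v = - om k P v w" by (rule anti) (simp add: d)
  moreover have "om k P v w' = - om k P w' v" by (rule anti) (simp add: dt_anti[of v w'] d')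
  ultimately have "- (om k P v w + om k P w u + om k P u w' + om k P w' v) = 0" using q by (simp add: algebra_simps)
  then have "om k P v w + om k P w u + om k P u w' + om k P w' v = 0" by (simp only: neg_equal_0_iff_equal)
  moreover have "rl omega w (- s) v = u" "rl 1 w (s * omega) v = w'" using s by (simp_all add: u_def w'_def)
  ultimately show ?thesis by simp
qed

lemma quad: assumes a: "adj v w" and s: "s = 1 \<or> s = -1"
  shows "om k P v w + om k P w (rl omega w (- s) v) + om k P (rl omega w (- s) v) (rl 1 w (s * omega) v)
     + om k P (rl 1 w (s * omega) v) v = 0"
proof -
  have "dt w v = 1 \<or> dt w v = -1" using a adj_def by auto
  then show ?thesis
  proof
    assume "dt w v = 1" then show ?thesis using quad_pos s by blast
  next
    assume d: "dt w v = -1"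
    have d': "dt w (rneg v) = 1" using d by (simp add: dt_rneg2)
    have s': "- s = 1 \<or> - s = -1" using s by auto
    have r1: "rl omega w (- (- s)) (rneg v) = rl omega w (- s) v" by (simp add: rl_def rneg_def)
    have r2: "rl 1 w (- s * omega) (rneg v) = rl 1 w (s * omega) v" by (simp add: rl_def rneg_def)
    show ?thesis using quad_pos[OF d' s'] unfolding r1 r2 om_negL om_negR .
  qed
qed

end


definition nv :: "row \<Rightarrow> nat" where "nv v = nO (fst v)"
definition vr :: "row \<Rightarrow> bool" where "vr v \<longleftrightarrow> (\<exists>w. adj v w)"
definition cnb :: "row \<Rightarrow> row" where "cnb v = (SOME w. adj v w \<and> nv w < nv v)"

lemma adj_inO2: "adj v w \<Longrightarrow> inO2 v" "adj v w \<Longrightarrow> inO2 w" by (simp_all add: adj_def)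

lemma nv_real: "inO2 v \<Longrightarrow> real (nv v) = (cmod (fst v))^2"
  by (simp add: nv_def inO2_def nO_real)

lemma nv_less: "inO2 v \<Longrightarrow> inO2 w \<Longrightarrow> nv v < nv w \<longleftrightarrow> cmod (fst v) < cmod (fst w)"
  by (simp add: nv_def inO2_def nO_less)

lemma nv_eq: "inO2 v \<Longrightarrow> inO2 w \<Longrightarrow> nv v = nv w \<longleftrightarrow> cmod (fst v) = cmod (fst w)"
  by (simp add: nv_def inO2_def nO_eq)

lemma nv_zero: "inO2 v \<Longrightarrow> nv v = 0 \<longleftrightarrow> fst v = 0"
proof -
  assume "inO2 v"
  then have "real (nv v) = (cmod (fst v))^2" by (rule nv_real)
  then show ?thesis by (metis of_nat_eq_0_iff norm_eq_zero zero_eq_power2)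
qed

lemma in_O_pm1: "e = 1 \<or> e = -1 \<Longrightarrow> in_O e" using in_O_uminus[of 1] by auto

lemma cnb_ex: assumes "vr v" "fst v \<noteq> 0" shows "\<exists>w. adj v w \<and> nv w < nv v"
proof -
  obtain w0 where a: "adj v w0" using assms(1) vr_def by auto
  have iv: "inO2 v" and iw: "inO2 w0" using a by (simp_all add: adj_def)
  obtain l where l: "in_O l" "cmod (fst w0 + l * fst v) < cmod (fst v)"
    using euclid_O[of "fst w0" "fst v"] iv iw assms(2) by (auto simp: inO2_def)
  define w where "w = rl 1 w0 l v"
  have iw': "inO2 w" unfolding w_def by (rule inO2_rl) (use l iv iw in auto)
  have "dt w v = dt w0 v" by (simp add: w_def dt_rl dt_self)
  then have "adj v w" using a iw' by (simp add: adj_def)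
  moreover have "nv w < nv v" using iw' iv l by (simp add: nv_less w_def rl_def)
  ultimately show ?thesis by blast
qed

lemma cnb: assumes "vr v" "fst v \<noteq> 0" shows "adj v (cnb v)" "nv (cnb v) < nv v"
  using someI_ex[OF cnb_ex[OF assms]] unfolding cnb_def by auto

function Fr :: "nat \<Rightarrow> complex poly poly \<Rightarrow> row \<Rightarrow> complex poly poly" where
  "Fr k P v = (if vr v \<and> fst v \<noteq> 0 then om k P v (cnb v) + Fr k P (cnb v) else 0)"
  by auto
termination by (relation "measure (\<lambda>(k, P, v). nv v)") (auto dest: cnb)

declare Fr.simps[simp del]

lemma Fr_step: "vr v \<Longrightarrow> fst v \<noteq> 0 \<Longrightarrow> Fr k P v = om k P v (cnb v) + Fr k P (cnb v)"
  by (simp add: Fr.simps)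
lemma Fr_zero: "fst v = 0 \<Longrightarrow> Fr k P v = 0"
  by (simp add: Fr.simps)
lemma Fr_nvr: "\<not> vr v \<Longrightarrow> Fr k P v = 0"
  by (simp add: Fr.simps)

lemma vr_adj: "adj v w \<Longrightarrow> vr v" "adj v w \<Longrightarrow> vr w"
  unfolding vr_def by (blast intro: adj_sym)+

lemma vr_rneg: "vr (rneg v) = vr v" by (simp add: vr_def adj_rneg1)

lemma nv_rneg: "nv (rneg v) = nv v" by (simp add: nv_def rneg_def nO_def)

lemma flag_int: fixes c v :: complex and m n :: int
  shows "(cmod c)^2 + (cmod (c + (of_int m + of_int n * omega) * v))^2 =
         (cmod (c + of_int m * v))^2 + (cmod (c + of_int n * omega * v))^2"
  using flag[of c "real_of_int m" "real_of_int n" v] by simp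

lemma u_norm_pm: fixes w v :: complex assumes "s = 1 \<or> s = -1"
  shows "(cmod (omega * w + - s * v))^2 = (cmod w)^2 + (cmod (w + s * omega * v))^2 - (cmod v)^2"
  using assms
proof
  assume "s = 1" then show ?thesis using u_norm[of 1 w v] by simp
next
  assume "s = -1" then show ?thesis using u_norm[of "-1" w v] by simp
qed

context rels
begin

definition Good :: "row \<Rightarrow> row \<Rightarrow> bool" where
  "Good v w \<longleftrightarrow> Fr k P v - Fr k P w = om k P v w"

abbreviation IHN :: "nat \<Rightarrow> bool" where
  "IHN N \<equiv> (\<forall>v w. adj v w \<longrightarrow> nv v < N \<longrightarrow> nv w < N \<longrightarrow> Good v w)"

lemma Good_sym: "adj v w \<Longrightarrow> Good v w \<Longrightarrow> Good w v"
  unfolding Good_def using anti_adj[of v w] by (simp add: algebra_simps)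

lemma Good_cnb: "vr v \<Longrightarrow> fst v \<noteq> 0 \<Longrightarrow> Good v (cnb v)"
  unfolding Good_def by (simp add: Fr_step)

lemma Fr_neg: assumes "fst w \<noteq> 0 \<Longrightarrow> vr w \<Longrightarrow> Good w (cnb (rneg w))"
  shows "Fr k P (rneg w) = Fr k P w"
proof (cases "fst w = 0")
  case True then show ?thesis by (simp add: Fr_zero rneg_def)
next
  case f: False
  show ?thesis
  proof (cases "vr w")
    case False then show ?thesis by (simp add: Fr_nvr vr_rneg)
  next
    case True
    have vr': "vr (rneg w)" using True by (simp only: vr_rneg)
    have f': "fst (rneg w) \<noteq> 0" using f by (simp add: rneg_def)
    have "Fr k P (rneg w) = om k P (rneg w) (cnb (rneg w)) + Fr k P (cnb (rneg w))" by (rule Fr_step[OF vr' f'])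
    also have "\<dots> = Fr k P w" using assms[OF f True] unfolding om_negL Good_def by (simp add: algebra_simps)
    finally show ?thesis .
  qed
qed

lemma Fr_neg_IH: assumes IH: "IHN N" and w: "nv w < N" shows "Fr k P (rneg w) = Fr k P w"
proof (rule Fr_neg)
  assume f: "fst w \<noteq> 0" and v: "vr w"
  have vr': "vr (rneg w)" using v by (simp only: vr_rneg)
  have f': "fst (rneg w) \<noteq> 0" using f by (simp add: rneg_def)
  have a: "adj w (cnb (rneg w))" using cnb(1)[OF vr' f'] by (simp add: adj_rneg1)
  have "nv (cnb (rneg w)) < nv w" using cnb(2)[OF vr' f'] by (simp add: nv_rneg)
  then show "Good w (cnb (rneg w))" using IH[rule_format, OF a] w by simp
qed

lemma stepT: assumes IH: "IHN N" and v: "nv v = N" and a: "adj v x" and x: "nv x < N"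
  and e: "e = 1 \<or> e = -1" and y: "nv (rl 1 x e v) < N" and g: "Good v x"
  shows "Good v (rl 1 x e v)"
proof -
  define y' where "y' = rl 1 x e v"
  have iv: "inO2 v" and ix: "inO2 x" using a by (simp_all add: adj_def)
  have iy: "inO2 y'" unfolding y'_def by (rule inO2_rl) (use e iv ix in_O_pm1 in auto)
  have dxv: "dt x v = 1 \<or> dt x v = -1" using a by (simp add: adj_def)
  have dyx: "dt y' x = e * dt v x" by (simp add: y'_def dt_rl dt_self)
  have "dt y' x = 1 \<or> dt y' x = -1" using dyx e dt_pm_anti[OF dxv] by auto
  then have axy: "adj x y'" using ix iy by (simp add: adj_def)
  have gxy: "Good x y'" using IH[rule_format, OF axy x] y y'_def by simp
  have dyv: "dt y' v = dt x v" by (simp add: y'_def dt_rl dt_self)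
  have an: "om k P y' v = - om k P v y'" by (rule anti) (use dyv dxv in auto)
  have t: "om k P v x + om k P x y' + om k P y' v = 0" using tri[OF a e] y'_def by simp
  show ?thesis using g gxy t an unfolding Good_def y'_def[symmetric]
    by (simp add: algebra_simps eq_neg_iff_add_eq_0)
qed

lemma stepQ: assumes IH: "IHN N" and v: "nv v = N" and a: "adj v x" and x: "nv x < N"
  and s: "s = 1 \<or> s = -1" and y: "nv (rl 1 x (s * omega) v) < N" and g: "Good v x"
  shows "Good v (rl 1 x (s * omega) v)"
proof -
  define y' where "y' = rl 1 x (s * omega) v"
  define u where "u = rl omega x (- s) v"
  have iv: "inO2 v" and ix: "inO2 x" using a by (simp_all add: adj_def)
  have sO: "in_O s" using s in_O_pm1 by auto
  have iy: "inO2 y'" unfolding y'_def by (rule inO2_rl) (use sO iv ix in_O_mult in auto)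
  have iu: "inO2 u" unfolding u_def by (rule inO2_rl) (use sO iv ix in_O_uminus in auto)
  have dxv: "dt x v = 1 \<or> dt x v = -1" using a by (simp add: adj_def)
  have dvx: "dt v x = 1 \<or> dt v x = -1" by (rule dt_pm_anti[OF dxv])
  have "dt u x = - s * dt v x" by (simp add: u_def dt_rl dt_self)
  then have "dt u x = 1 \<or> dt u x = -1" using s dvx by auto
  then have axu: "adj x u" using ix iu by (simp add: adj_def)
  have "dt y' u = s * dt x v" using s
    by (auto simp add: y'_def u_def dt_rl dt_rl2 dt_self dt_anti[of v x] algebra_simps omega_sq' omega_sq)
  then have "dt y' u = 1 \<or> dt y' u = -1" using s dxv by auto
  then have auy: "adj u y'" using iu iy by (simp add: adj_def)
  have nu: "nv u < N"
  proof -
    have "(cmod (fst u))^2 = (cmod (fst x))^2 + (cmod (fst y'))^2 - (cmod (fst v))^2"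
      using u_norm_pm[OF s, of "fst x" "fst v"] by (simp add: u_def y'_def rl_def)
    then have "real (nv u) = real (nv x) + real (nv y') - real (nv v)" using iu ix iy iv by (simp add: nv_real)
    moreover have "real (nv x) < real N" "real (nv y') < real N" "real (nv v) = real N"
      using x y v y'_def by simp_all
    ultimately have "real (nv u) < real N" by linarith
    then show ?thesis by simp
  qed
  have gxu: "Good x u" using IH[rule_format, OF axu x nu] .
  have guy: "Good u y'" using IH[rule_format, OF auy nu] y y'_def by simp
  have dyv: "dt y' v = dt x v" by (simp add: y'_def dt_rl dt_self)
  have an: "om k P y' v = - om k P v y'" by (rule anti) (use dyv dxv in auto)
  have q: "om k P v x + om k P x u + om k P u y' + om k P y' v = 0" using quad[OF a s] y'_def u_def by simp
  show ?thesis using g gxu guy q an unfolding Good_def y'_def[symmetric]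
    by (simp add: algebra_simps eq_neg_iff_add_eq_0)
qed

end


lemma adj_shift: assumes "adj v x" "in_O b" shows "adj v (rl 1 x b v)"
proof -
  have iv: "inO2 v" and ix: "inO2 x" using assms(1) by (simp_all add: adj_def)
  have "inO2 (rl 1 x b v)" by (rule inO2_rl) (use iv ix assms(2) in auto)
  moreover have "dt (rl 1 x b v) v = dt x v" by (simp add: dt_rl dt_self)
  ultimately show ?thesis using assms(1) by (simp add: adj_def)
qed

lemma cramer: "fst D * dt c v = dt D v * fst c + dt c D * fst v"
  "snd D * dt c v = dt D v * snd c + dt c D * snd v"
  by (simp_all add: dt_def algebra_simps)

context rels
begin

lemma reach: assumes IH: "IHN N" and v: "nv v = N" and a: "adj v x" and x: "nv x < N" and g: "Good v x"
  and m: "m \<in> {-1, 0, 1}" and n: "n \<in> {-1, 0, 1}"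
  and t: "nv (rl 1 x (of_int m + of_int n * omega) v) < N"
  shows "Good v (rl 1 x (of_int m + of_int n * omega) v)"
proof -
  have iv: "inO2 v" and ix: "inO2 x" using a by (simp_all add: adj_def)
  consider "m = 0" "n = 0" | "m \<noteq> 0" "n = 0" | "m = 0" "n \<noteq> 0" | "m \<noteq> 0" "n \<noteq> 0" by blast
  then show ?thesis
  proof cases
    case 1 then show ?thesis using g by (simp add: rl_def)
  next
    case 2
    have e: "(of_int m :: complex) = 1 \<or> of_int m = -1" using m 2 by auto
    show ?thesis using stepT[OF IH v a x e] t g 2 by simp
  next
    case 3
    have s: "(of_int n :: complex) = 1 \<or> of_int n = -1" using n 3 by auto
    show ?thesis using stepQ[OF IH v a x s] t g 3 by simp
  next
    case 4
    have e: "(of_int m :: complex) = 1 \<or> of_int m = -1" using m 4 by auto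
    have s: "(of_int n :: complex) = 1 \<or> of_int n = -1" using n 4 by auto
    define x' where "x' = rl 1 x (of_int m) v"
    define x'' where "x'' = rl 1 x (of_int n * omega) v"
    have ax': "adj v x'" unfolding x'_def by (rule adj_shift[OF a]) simp
    have ax'': "adj v x''" unfolding x''_def by (rule adj_shift[OF a]) (simp add: in_O_mult)
    have ix': "inO2 x'" and ix'': "inO2 x''" using ax' ax'' by (simp_all add: adj_def)
    have it: "inO2 (rl 1 x (of_int m + of_int n * omega) v)" using t adj_shift[OF a, of "of_int m + of_int n * omega"]
      by (simp add: adj_def in_O_add in_O_mult)
    have fl: "(cmod (fst x))^2 + (cmod (fst (rl 1 x (of_int m + of_int n * omega) v)))^2 =
         (cmod (fst x'))^2 + (cmod (fst x''))^2"
      using flag_int[of "fst x" m n "fst v"] by (simp add: rl_def x'_def x''_def)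
    have "real (nv x) + real (nv (rl 1 x (of_int m + of_int n * omega) v)) = real (nv x') + real (nv x'')"
      using fl ix it ix' ix'' by (simp add: nv_real)
    moreover have "real (nv x) < real N" "real (nv (rl 1 x (of_int m + of_int n * omega) v)) < real N"
      using x t by simp_all
    ultimately have "real (nv x') < real N \<or> real (nv x'') < real N" by linarith
    then have "nv x' < N \<or> nv x'' < N" by simp
    then show ?thesis
    proof
      assume x': "nv x' < N"
      have g': "Good v x'" using stepT[OF IH v a x e] x' g unfolding x'_def by simp
      have r: "rl 1 x' (of_int n * omega) v = rl 1 x (of_int m + of_int n * omega) v"
        by (simp add: x'_def rl_def algebra_simps)
      show ?thesis using stepQ[OF IH v ax' x' s] t g' r by simp
    next
      assume x'': "nv x'' < N"
      have g'': "Good v x''" using stepQ[OF IH v a x s] x'' g unfolding x''_def by simp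
      have r: "rl 1 x'' (of_int m) v = rl 1 x (of_int m + of_int n * omega) v"
        by (simp add: x''_def rl_def algebra_simps)
      show ?thesis using stepT[OF IH v ax'' x'' e] t g'' r by simp
    qed
  qed
qed

lemma step_a: assumes IH: "IHN N" and v: "nv v = N" and a: "adj v w" and w: "nv w < N"
  shows "Good v w"
proof -
  have iv: "inO2 v" and iw: "inO2 w" using a by (simp_all add: adj_def)
  have f: "fst v \<noteq> 0" using v w nv_zero[OF iv] by auto
  have vv: "vr v" using a by (rule vr_adj)
  define c where "c = cnb v"
  have ac: "adj v c" and nc: "nv c < N" using cnb[OF vv f] v by (simp_all add: c_def)
  have gc: "Good v c" using Good_cnb[OF vv f] c_def by simp
  have ic: "inO2 c" using ac by (simp add: adj_def)
  have dc: "dt c v = 1 \<or> dt c v = -1" using ac by (simp add: adj_def)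
  have dw: "dt w v = 1 \<or> dt w v = -1" using a by (simp add: adj_def)
  define w' where "w' = (if dt w v = dt c v then w else rneg w)"
  have aw': "adj v w'" using a by (simp add: w'_def adj_rneg2 adj_sym)
  have iw': "inO2 w'" using aw' by (simp add: adj_def)
  have nw': "nv w' = nv w" by (simp add: w'_def nv_rneg)
  have dw': "dt w' v = dt c v" using dc dw by (auto simp: w'_def dt_rneg1)
  have bk: "Good v w' \<Longrightarrow> Good v w"
    using Fr_neg_IH[OF IH w] by (auto simp: w'_def Good_def om_negR split: if_splits)
  define D where "D = rl 1 w' (-1) c"
  have dD: "dt D v = 0" by (simp add: D_def dt_rl dw')
  define mu where "mu = dt c v * dt c D"
  have ss: "dt c v * dt c v = 1" using dc by auto
  have fD: "fst D = mu * fst v" and sD: "snd D = mu * snd v"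
  proof -
    have "fst D = fst D * (dt c v * dt c v)" using ss by simp
    also have "\<dots> = (fst D * dt c v) * dt c v" by (simp only: mult.assoc)
    also have "\<dots> = mu * fst v" unfolding cramer dD mu_def by (simp add: algebra_simps)
    finally show "fst D = mu * fst v" .
    have "snd D = snd D * (dt c v * dt c v)" using ss by simp
    also have "\<dots> = (snd D * dt c v) * dt c v" by (simp only: mult.assoc)
    also have "\<dots> = mu * snd v" unfolding cramer dD mu_def by (simp add: algebra_simps)
    finally show "snd D = mu * snd v" .
  qed
  have w'eq: "w' = rl 1 c mu v"
    using fD sD by (simp add: D_def rl_def prod_eq_iff algebra_simps)
  have muO: "in_O mu"
  proof -
    have "inO2 D" unfolding D_def by (rule inO2_rl) (use iw' ic in_O_pm1 in auto)
    then have "in_O (dt c D)" using ic by (simp add: dt_def inO2_def in_O_mult in_O_diff)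
    then show ?thesis unfolding mu_def using in_O_pm1[OF dc] in_O_mult by blast
  qed
  have "nv w' < nv v" using nw' w v by simp
  then have "cmod (fst w') < cmod (fst v)" using nv_less[OF iw' iv] by simp
  moreover have "fst w' = fst c + mu * fst v" using w'eq by (simp add: rl_def)
  ultimately have "cmod (fst c + mu * fst v) < cmod (fst v)" by simp
  moreover have "cmod (fst c) < cmod (fst v)" using nc v nv_less[OF ic iv] by simp
  ultimately have "cmod mu < 2" by (rule mu_small)
  then obtain m n :: int where mn: "mu = of_int m + of_int n * omega" "m \<in> {-1, 0, 1}" "n \<in> {-1, 0, 1}"
    using small_O[OF muO] by blast
  have "Good v w'" using reach[OF IH v ac nc gc mn(2) mn(3)] w'eq mn(1) nw' w by simp
  then show ?thesis by (rule bk)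
qed

lemma bT: assumes IH: "IHN N" and SA: "\<And>v w. adj v w \<Longrightarrow> nv v = N \<Longrightarrow> nv w < N \<Longrightarrow> Good v w"
  and a: "adj v w" and v: "nv v = N" and w: "nv w = N"
  and e: "e = 1 \<or> e = -1" and y: "nv (rl 1 w e v) < N"
  shows "Good v w"
proof -
  define y' where "y' = rl 1 w e v"
  have avy: "adj v y'" unfolding y'_def by (rule adj_shift[OF a in_O_pm1[OF e]])
  have iy: "inO2 y'" using avy by (simp add: adj_def)
  have dw: "dt w v = 1 \<or> dt w v = -1" using a by (simp add: adj_def)
  have "dt y' w = e * dt v w" by (simp add: y'_def dt_rl dt_self)
  then have "dt y' w = 1 \<or> dt y' w = -1" using e dt_pm_anti[OF dw] by auto
  then have awy: "adj w y'" using a iy by (simp add: adj_def)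
  have g1: "Good v y'" using SA[OF avy v] y y'_def by simp
  have g2: "Good w y'" using SA[OF awy w] y y'_def by simp
  have an: "om k P y' v = - om k P v y'" by (rule anti) (use dw in \<open>simp add: y'_def dt_rl dt_self\<close>)
  have t: "om k P v w + om k P w y' + om k P y' v = 0" using tri[OF a e] y'_def by simp
  show ?thesis using g1 g2 t an unfolding Good_def by (simp add: algebra_simps eq_neg_iff_add_eq_0)
qed

lemma bQ: assumes IH: "IHN N" and SA: "\<And>v w. adj v w \<Longrightarrow> nv v = N \<Longrightarrow> nv w < N \<Longrightarrow> Good v w"
  and a: "adj v w" and v: "nv v = N" and w: "nv w = N"
  and s: "s = 1 \<or> s = -1" and y: "nv (rl 1 w (s * omega) v) < N"
  shows "Good v w"
proof -
  define y' where "y' = rl 1 w (s * omega) v"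
  define u where "u = rl omega w (- s) v"
  have sO: "in_O s" using in_O_pm1[OF s] .
  have avy: "adj v y'" unfolding y'_def by (rule adj_shift[OF a]) (simp add: sO in_O_mult)
  have iv: "inO2 v" and iw: "inO2 w" using a by (simp_all add: adj_def)
  have iy: "inO2 y'" using avy by (simp add: adj_def)
  have iu: "inO2 u" unfolding u_def by (rule inO2_rl) (use sO iv iw in_O_uminus in auto)
  have dw: "dt w v = 1 \<or> dt w v = -1" using a by (simp add: adj_def)
  have dvw: "dt v w = 1 \<or> dt v w = -1" by (rule dt_pm_anti[OF dw])
  have "dt u w = - s * dt v w" by (simp add: u_def dt_rl dt_self)
  then have "dt u w = 1 \<or> dt u w = -1" using s dvw by auto
  then have awu: "adj w u" using iw iu by (simp add: adj_def)
  have "dt y' u = s * dt w v" using s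
    by (auto simp add: y'_def u_def dt_rl dt_rl2 dt_self dt_anti[of v w] algebra_simps omega_sq' omega_sq)
  then have "dt y' u = 1 \<or> dt y' u = -1" using s dw by auto
  then have auy: "adj u y'" using iu iy by (simp add: adj_def)
  have nu: "nv u < N"
  proof -
    have "(cmod (fst u))^2 = (cmod (fst w))^2 + (cmod (fst y'))^2 - (cmod (fst v))^2"
      using u_norm_pm[OF s, of "fst w" "fst v"] by (simp add: u_def y'_def rl_def)
    then have "real (nv u) = real (nv w) + real (nv y') - real (nv v)" using iu iw iy iv by (simp add: nv_real)
    moreover have "real (nv y') < real N" "real (nv v) = real N" "real (nv w) = real N"
      using y v w y'_def by simp_all
    ultimately have "real (nv u) < real N" by linarith
    then show ?thesis by simp
  qed
  have g1: "Good w u" using SA[OF awu w nu] .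
  have g2: "Good u y'" using IH[rule_format, OF auy nu] y y'_def by simp
  have g3: "Good v y'" using SA[OF avy v] y y'_def by simp
  have an: "om k P y' v = - om k P v y'" by (rule anti) (use dw in \<open>simp add: y'_def dt_rl dt_self\<close>)
  have q: "om k P v w + om k P w u + om k P u y' + om k P y' v = 0" using quad[OF a s] y'_def u_def by simp
  show ?thesis using g1 g2 g3 q an unfolding Good_def by (simp add: algebra_simps eq_neg_iff_add_eq_0)
qed

lemma step_b: assumes IH: "IHN N" and SA: "\<And>v w. adj v w \<Longrightarrow> nv v = N \<Longrightarrow> nv w < N \<Longrightarrow> Good v w"
  and a: "adj v w" and v: "nv v = N" and w: "nv w = N" and N: "N > 0"
  shows "Good v w"
proof -
  have iv: "inO2 v" and iw: "inO2 w" using a by (simp_all add: adj_def)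
  have f: "fst v \<noteq> 0" using v N nv_zero[OF iv] by auto
  have "nv w = nv v" using v w by simp
  then have eq: "cmod (fst w) = cmod (fst v)" using nv_eq[OF iw iv] by simp
  have lt: "nv y < N" if "inO2 y" "cmod (fst y) < cmod (fst v)" for y
    using that(2) v nv_less[OF that(1) iv] by simp
  have i1: "inO2 (rl 1 w e v)" if "in_O e" for e by (rule inO2_rl) (use iv iw that in auto)
  have m1: "in_O (-1)" by (simp add: in_O_uminus)
  have o1: "in_O omega" "in_O (- omega)" by (simp_all add: in_O_uminus)
  from unit_circle[OF eq f] show ?thesis
  proof (elim disjE)
    assume h: "cmod (fst w + fst v) < cmod (fst v)"
    show ?thesis by (rule bT[OF IH SA a v w, of 1]) (use lt[OF i1[OF in_O_1]] h in \<open>simp_all add: rl_def\<close>)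
  next
    assume h: "cmod (fst w - fst v) < cmod (fst v)"
    show ?thesis by (rule bT[OF IH SA a v w, of "-1"]) (use lt[OF i1[OF m1]] h in \<open>simp_all add: rl_def\<close>)
  next
    assume h: "cmod (fst w + omega * fst v) < cmod (fst v)"
    show ?thesis by (rule bQ[OF IH SA a v w, of 1]) (use lt[OF i1[OF o1(1)]] h in \<open>simp_all add: rl_def\<close>)
  next
    assume h: "cmod (fst w - omega * fst v) < cmod (fst v)"
    show ?thesis by (rule bQ[OF IH SA a v w, of "-1"]) (use lt[OF i1[OF o1(2)]] h in \<open>simp_all add: rl_def\<close>)
  qed
qed

lemma IHN_all: "IHN N"
proof (induction N)
  case 0 then show ?case by simp
next
  case (Suc N)
  have SA: "\<And>v w. adj v w \<Longrightarrow> nv v = N \<Longrightarrow> nv w < N \<Longrightarrow> Good v w"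
    using step_a[OF Suc.IH] by blast
  show ?case
  proof (intro allI impI)
    fix v w assume a: "adj v w" and v: "nv v < Suc N" and w: "nv w < Suc N"
    have iv: "inO2 v" and iw: "inO2 w" using a by (simp_all add: adj_def)
    consider "nv v < N" "nv w < N" | "nv v = N" "nv w < N" | "nv v < N" "nv w = N" | "nv v = N" "nv w = N"
      using v w by linarith
    then show "Good v w"
    proof cases
      case 1 then show ?thesis using Suc.IH a by blast
    next
      case 2 then show ?thesis using SA a by blast
    next
      case 3 then show ?thesis using SA[OF adj_sym[OF a]] Good_sym[OF adj_sym[OF a]] by blast
    next
      case 4
      show ?thesis
      proof (cases "N = 0")
        case True
        then have "fst v = 0" "fst w = 0" using 4 nv_zero iv iw by auto
        then have "dt w v = 0" by (simp add: dt_def)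
        then show ?thesis using a by (simp add: adj_def)
      next
        case False
        then show ?thesis using step_b[OF Suc.IH SA a 4] by simp
      qed
    qed
  qed
qed

lemma good_all: assumes "adj v w" shows "Good v w"
proof -
  have H: "IHN (Suc (max (nv v) (nv w)))" by (rule IHN_all)
  have "adj v w \<longrightarrow> nv v < Suc (max (nv v) (nv w)) \<longrightarrow> nv w < Suc (max (nv v) (nv w)) \<longrightarrow> Good v w"
    using H by blast
  then show ?thesis using assms by simp
qed

end


lemma mneg_mneg[simp]: "mneg (mneg M) = M" by (cases M) simp
lemma mmul_mneg1: "mmul (mneg M) N = mneg (mmul M N)" by (cases M, cases N) simp
lemma mmul_mneg2: "mmul M (mneg N) = mneg (mmul M N)" by (cases M, cases N) simp

lemma pcl_mneg: "pcl (mneg M) = pcl M" by (auto simp: pcl_def)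

lemma pmul_pcl: "pmul (pcl M) (pcl N) = pcl (mmul M N)"
  by (auto simp: pmul_def pcl_def mmul_mneg1 mmul_mneg2 image_iff)

lemma SL2O_mmul: assumes "M \<in> SL2O" "N \<in> SL2O" shows "mmul M N \<in> SL2O"
proof -
  obtain a b c e where M: "M = (a, b, c, e)" by (cases M) auto
  obtain a' b' c' e' where N: "N = (a', b', c', e')" by (cases N) auto
  have d: "(a * a' + b * c') * (c * b' + e * e') - (a * b' + b * e') * (c * a' + e * c') = (a * e - b * c) * (a' * e' - b' * c')"
    by (simp add: algebra_simps)
  show ?thesis using assms unfolding M N SL2O_def using d by (auto simp: in_O_add in_O_mult)
qed

lemma SL2O_mneg: "M \<in> SL2O \<Longrightarrow> mneg M \<in> SL2O"
  by (cases M) (auto simp: SL2O_def in_O_uminus)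

lemma Gamma2_iff: "X \<in> Gamma2 \<longleftrightarrow> (\<exists>M\<in>SL2O. X = pcl M)"
  by (auto simp: Gamma2_def)

lemma pcl_Gamma2: "M \<in> SL2O \<Longrightarrow> pcl M \<in> Gamma2" by (auto simp: Gamma2_def)

lemma rep_pcl: "rep (pcl M) = M \<or> rep (pcl M) = mneg M"
proof -
  have "M \<in> pcl M" by (simp add: pcl_def)
  then have "rep (pcl M) \<in> pcl M" unfolding rep_def by (rule someI)
  then show ?thesis by (simp add: pcl_def)
qed

lemma pslash_pcl: "pslash k P (pcl M) = slash k P M"
  using rep_pcl[of M] by (auto simp: pslash_def slash_neg)

definition brow :: "mat2 \<Rightarrow> row" where "brow M = (case M of (a, b, c, e) \<Rightarrow> (c, e))"

lemma brow_mmul: "brow (mmul M N) = rmul (brow M) N"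
  by (cases M, cases N) (simp add: brow_def rmul_def)
lemma brow_mneg: "brow (mneg M) = rneg (brow M)"
  by (cases M) (simp add: brow_def rneg_def)

lemma SL2O_adj: assumes "(a, b, c, e) \<in> SL2O" shows "adj (c, e) (a, b)"
  using assms by (simp add: SL2O_def adj_def inO2_def dt_def)

lemma vr_brow: "M \<in> SL2O \<Longrightarrow> vr (brow M)"
  by (cases M) (auto simp: brow_def intro: vr_adj(1) SL2O_adj)

lemma Vkk_0: "0 \<in> Vkk k" by (simp add: Vkk_def)
lemma Vkk_add: "P \<in> Vkk k \<Longrightarrow> Q \<in> Vkk k \<Longrightarrow> P + Q \<in> Vkk k"
  unfolding Vkk_Vd by (rule Vd_add)
lemma Vkk_smult: assumes "P \<in> Vkk k" shows "smult [:c:] P \<in> Vkk k"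
proof -
  have "degree (smult [:c:] P) \<le> k" using assms degree_smult_le[of "[:c:]" P] by (auto simp: Vkk_def)
  moreover have "degree (coeff (smult [:c:] P) j) \<le> k" for j
    using assms degree_smult_le[of c "coeff P j"] by (auto simp: Vkk_def)
  ultimately show ?thesis by (simp add: Vkk_def)
qed

lemma Fr_Vkk: "Fr k P v \<in> Vkk k"
proof (induction k P v rule: Fr.induct)
  case (1 k P v)
  show ?case
  proof (cases "vr v \<and> fst v \<noteq> 0")
    case True
    then have "Fr k P v = om k P v (cnb v) + Fr k P (cnb v)" by (simp add: Fr_step)
    then show ?thesis using 1 True by (simp add: om_def slash_Vkk Vkk_add)
  next
    case False then show ?thesis by (auto simp: Fr_nvr Fr_zero Vkk_0)
  qed
qed

lemma unit_row: assumes "adj (0, y) w" shows "y = 1 \<or> y = -1"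
proof -
  have iy: "in_O y" and iw: "in_O (fst w)" using assms by (auto simp: adj_def inO2_def)
  have "fst w * y = 1 \<or> fst w * y = -1" using assms by (simp add: adj_def dt_def)
  then show ?thesis
  proof
    assume "fst w * y = 1" then have "y * fst w = 1" by (simp add: mult.commute)
    then show ?thesis using unit_O[OF iy iw] by simp
  next
    assume "fst w * y = -1" then have "y * (- fst w) = 1" by (simp add: algebra_simps)
    then show ?thesis using unit_O[OF iy in_O_uminus[OF iw]] by simp
  qed
qed

lemma rmul_rneg: "rmul (rneg v) Y = rneg (rmul v Y)"
  by (cases Y) (simp add: rmul_def rneg_def algebra_simps)

lemma rmul_01: "rmul (0, 1) Y = brow Y"
  by (cases Y) (simp add: rmul_def brow_def)

context rels
begin

lemma Fr_rneg: "Fr k P (rneg w) = Fr k P w"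
proof (rule Fr_neg)
  assume f: "fst w \<noteq> 0" and v: "vr w"
  have vr': "vr (rneg w)" using v by (simp only: vr_rneg)
  have f': "fst (rneg w) \<noteq> 0" using f by (simp add: rneg_def)
  have "adj w (cnb (rneg w))" using cnb(1)[OF vr' f'] by (simp add: adj_rneg1)
  then show "Good w (cnb (rneg w))" by (rule good_all)
qed

lemma equiv: assumes Y: "Y \<in> SL2O"
  shows "vr v \<Longrightarrow> Fr k P (rmul v Y) = slash k (Fr k P v) Y + Fr k P (brow Y)"
proof (induction "nv v" arbitrary: v rule: less_induct)
  case less
  obtain a b c e where Yd: "Y = (a, b, c, e)" by (cases Y) auto
  have YO: "in_O a" "in_O b" "in_O c" "in_O e" and dY: "mdet (a, b, c, e) = 1"
    using Y Yd by (auto simp: SL2O_def)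
  show ?case
  proof (cases "fst v = 0")
    case False
    define d where "d = cnb v"
    have ad: "adj v d" and nd: "nv d < nv v" using cnb[OF less.prems False] by (simp_all add: d_def)
    have vd: "vr d" using ad by (rule vr_adj)
    have IH: "Fr k P (rmul d Y) = slash k (Fr k P d) Y + Fr k P (brow Y)" using less.hyps[OF nd vd] .
    have Fv: "Fr k P v = om k P v d + Fr k P d" using Fr_step[OF less.prems False] d_def by simp
    have a2: "adj (rmul v Y) (rmul d Y)" unfolding Yd by (rule adj_rmul[OF ad YO dY])
    have g: "Fr k P (rmul v Y) - Fr k P (rmul d Y) = om k P (rmul v Y) (rmul d Y)"
      using good_all[OF a2] by (simp add: Good_def)
    have "om k P (rmul v Y) (rmul d Y) = slash k (om k P v d) Y"
      by (rule om_equiv) (use dY Yd in simp)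
    then show ?thesis using g IH Fv by (simp add: slash_add algebra_simps)
  next
    case True
    obtain y where v: "v = (0, y)" using True by (cases v) auto
    obtain w where "adj v w" using less.prems vr_def by auto
    then have "y = 1 \<or> y = -1" using unit_row v by simp
    then show ?thesis
    proof
      assume "y = 1"
      then show ?thesis using v by (simp add: rmul_01 Fr_zero slash_0)
    next
      assume "y = -1"
      then have "v = rneg (0, 1)" using v by (simp add: rneg_def)
      then show ?thesis by (simp add: rmul_rneg Fr_rneg rmul_01 Fr_zero slash_0)
    qed
  qed
qed

end


definition fP :: "nat \<Rightarrow> complex poly poly \<Rightarrow> mat2 set \<Rightarrow> complex poly poly" where
  "fP k P X = (if X \<in> Gamma2 then Fr k P (brow (rep X)) else 0)"

definition Tl :: "complex \<Rightarrow> mat2" where "Tl x = (1, x, 0, 1)"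

lemma Tl_SL: "in_O x \<Longrightarrow> Tl x \<in> SL2O" by (simp add: Tl_def SL2O_def)
lemma Tl_add: "mmul (Tl x) (Tl y) = Tl (x + y)" by (simp add: Tl_def)
lemma Tl_0: "Tl 0 = (1, 0, 0, 1)" by (simp add: Tl_def)
lemma Tl_1: "Tl 1 = matT" by (simp add: Tl_def matT_def)
lemma Tl_om: "Tl omega = matTw" by (simp add: Tl_def matTw_def)

lemma SL_S: "matS \<in> SL2O" and SL_T: "matT \<in> SL2O" and SL_Tw: "matTw \<in> SL2O" and SL_Twinv: "matTwinv \<in> SL2O"
  and SL_I: "(1, 0, 0, 1) \<in> SL2O"
  by (simp_all add: SL2O_def matS_def matT_def matTw_def matTwinv_def in_O_uminus)

lemma Wkk_rels: "P \<in> Wkk k \<Longrightarrow> rels k P"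
  by (rule rels.intro) (auto simp: Wkk_def)

lemma mdet_SL: "M \<in> SL2O \<Longrightarrow> mdet M = 1" by (cases M) (simp add: SL2O_def)

context rels
begin

lemma fP_pcl: assumes "M \<in> SL2O" shows "fP k P (pcl M) = Fr k P (brow M)"
proof -
  have "pcl M \<in> Gamma2" using assms by (rule pcl_Gamma2)
  then show ?thesis using rep_pcl[of M] by (auto simp: fP_def brow_mneg Fr_rneg)
qed

lemma fP_Cp: "fP k P \<in> Cp k"
proof -
  have 1: "\<forall>X\<in>Gamma2. fP k P X \<in> Vkk k" by (simp add: fP_def Fr_Vkk)
  have 2: "\<forall>X. X \<notin> Gamma2 \<longrightarrow> fP k P X = 0" by (simp add: fP_def)
  have 3: "\<forall>X\<in>Gamma2. \<forall>Y\<in>Gamma2. fP k P (pmul X Y) = pslash k (fP k P X) Y + fP k P Y"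
  proof (intro ballI)
    fix X Y assume "X \<in> Gamma2" "Y \<in> Gamma2"
    then obtain M N where M: "M \<in> SL2O" "X = pcl M" and N: "N \<in> SL2O" "Y = pcl N" by (auto simp: Gamma2_iff)
    have MN: "mmul M N \<in> SL2O" using M N by (simp add: SL2O_mmul)
    have "fP k P (pmul X Y) = Fr k P (brow (mmul M N))" using M N MN by (simp add: pmul_pcl fP_pcl)
    also have "\<dots> = slash k (Fr k P (brow M)) N + Fr k P (brow N)"
      unfolding brow_mmul by (rule equiv[OF N(1) vr_brow[OF M(1)]])
    also have "\<dots> = pslash k (fP k P X) Y + fP k P Y" using M N by (simp add: fP_pcl pslash_pcl)
    finally show "fP k P (pmul X Y) = pslash k (fP k P X) Y + fP k P Y" .
  qed
  have 4: "fP k P (pcl matT) = 0" using SL_T by (simp add: fP_pcl matT_def brow_def Fr_zero)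
  have 5: "fP k P (pcl matTw) = 0" using SL_Tw by (simp add: fP_pcl matTw_def brow_def Fr_zero)
  show ?thesis using 1 2 3 4 5 by (simp add: Cp_def)
qed

lemma fP_S: assumes "P \<in> Vkk k" shows "fP k P (pcl matS) = P"
proof -
  have a: "adj (1, 0) (0, 1)" by (simp add: adj_def inO2_def dt_def)
  have "Fr k P (1, 0) - Fr k P (0, 1) = om k P (1, 0) (0, 1)" using good_all[OF a] by (simp add: Good_def)
  also have "om k P (1, 0) (0, 1) = slash k P (1, 0, 0, 1)" by (simp add: om_def dt_def)
  also have "\<dots> = P" using assms by (rule slash_id)
  finally have "Fr k P (1, 0) = P" by (simp add: Fr_zero)
  then show ?thesis using SL_S by (simp add: fP_pcl matS_def brow_def)
qed

end

lemma Cp_cocyc: assumes f: "f \<in> Cp k" and M: "M \<in> SL2O" and N: "N \<in> SL2O"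
  shows "f (pcl (mmul M N)) = slash k (f (pcl M)) N + f (pcl N)"
proof -
  have "f (pmul (pcl M) (pcl N)) = pslash k (f (pcl M)) (pcl N) + f (pcl N)"
    using f pcl_Gamma2[OF M] pcl_Gamma2[OF N] by (simp add: Cp_def)
  then show ?thesis by (simp add: pmul_pcl pslash_pcl)
qed

lemma Cp_Vkk: "f \<in> Cp k \<Longrightarrow> M \<in> SL2O \<Longrightarrow> f (pcl M) \<in> Vkk k"
  using pcl_Gamma2 by (simp add: Cp_def)

lemma Cp_I: assumes f: "f \<in> Cp k" shows "f (pcl (1, 0, 0, 1)) = 0"
proof -
  let ?X = "f (pcl (1, 0, 0, 1))"
  have "?X = slash k ?X (1, 0, 0, 1) + ?X" using Cp_cocyc[OF f SL_I SL_I] by simp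
  then have "slash k ?X (1, 0, 0, 1) = 0" by simp
  then show ?thesis using slash_id[OF Cp_Vkk[OF f SL_I]] by simp
qed

lemma Cp_negI: assumes f: "f \<in> Cp k" and "M = mneg (1, 0, 0, 1)" shows "f (pcl M) = 0"
  using Cp_I[OF f] assms(2) pcl_mneg by metis

lemma Cp_Tl: assumes f: "f \<in> Cp k" and x: "in_O x" shows "f (pcl (Tl x)) = 0"
proof -
  have fadd: "f (pcl (Tl (x + y))) = 0" if "in_O x" "in_O y" "f (pcl (Tl x)) = 0" "f (pcl (Tl y)) = 0" for x y
    using Cp_cocyc[OF f Tl_SL[OF that(1)] Tl_SL[OF that(2)]] that by (simp add: Tl_add slash_0)
  have fneg: "f (pcl (Tl (- y))) = 0" if "in_O y" "f (pcl (Tl y)) = 0" for y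
  proof -
    let ?X = "f (pcl (Tl (- y)))"
    have y': "in_O (- y)" using that(1) by (rule in_O_uminus)
    have "f (pcl (Tl (- y + y))) = slash k ?X (Tl y) + f (pcl (Tl y))"
      using Cp_cocyc[OF f Tl_SL[OF y'] Tl_SL[OF that(1)]] by (simp add: Tl_add)
    then have "slash k ?X (Tl y) = 0" using that Cp_I[OF f] by (simp add: Tl_0)
    then have "slash k (slash k ?X (Tl y)) (Tl (- y)) = 0" by (simp add: slash_0)
    then have "slash k ?X (Tl 0) = 0" by (simp add: slash_comp Tl_def Tl_add[symmetric])
    then show ?thesis using slash_id[OF Cp_Vkk[OF f Tl_SL[OF y']]] by (simp add: Tl_0)
  qed
  have T1: "f (pcl (Tl 1)) = 0" using f by (simp add: Tl_1 Cp_def)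
  have To: "f (pcl (Tl omega)) = 0" using f by (simp add: Tl_om Cp_def)
  have ints: "f (pcl (Tl (of_int m * t))) = 0" if t: "in_O t" "f (pcl (Tl t)) = 0" for m :: int and t
  proof (induction m rule: int_induct[where k = 0])
    case base then show ?case using Cp_I[OF f] by (simp add: Tl_0)
  next
    case (step1 i)
    have "f (pcl (Tl (of_int i * t + t))) = 0" by (rule fadd) (use step1 t in_O_mult in auto)
    then show ?case by (simp add: algebra_simps)
  next
    case (step2 i)
    have "f (pcl (Tl (of_int i * t + - t))) = 0"
      by (rule fadd) (use step2 t in_O_mult in_O_uminus fneg in auto)
    then show ?case by (simp add: algebra_simps)
  qed
  obtain m n :: int where xd: "x = of_int m + of_int n * omega" using x in_O_def by auto
  have "f (pcl (Tl (of_int m * 1 + of_int n * omega))) = 0"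
    by (rule fadd) (use ints[OF in_O_1 T1] ints[OF in_O_omega To] in_O_mult in auto)
  then show ?thesis using xd by simp
qed


lemma Cp_Wkk: assumes f: "f \<in> Cp k" shows "f (pcl matS) \<in> Wkk k"
proof -
  define P where "P = f (pcl matS)"
  have PV: "P \<in> Vkk k" using Cp_Vkk[OF f SL_S] P_def by simp
  have fT: "f (pcl matT) = 0" and fTw: "f (pcl matTw) = 0" using f by (simp_all add: Cp_def)
  have SLU: "matU \<in> SL2O" unfolding matU_def by (rule SL2O_mmul[OF SL_T SL_S])
  have SLUU: "mmul matU matU \<in> SL2O" by (rule SL2O_mmul[OF SLU SLU])
  have w1: "P + slash k P matS = 0"
  proof -
    have "mmul matS matS = mneg (1, 0, 0, 1)" by (simp add: matS_def)
    then have "f (pcl (mmul matS matS)) = 0" by (rule Cp_negI[OF f])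
    then show ?thesis using Cp_cocyc[OF f SL_S SL_S] P_def by (simp add: add.commute)
  qed
  have fU: "f (pcl matU) = P"
    using Cp_cocyc[OF f SL_T SL_S] fT P_def by (simp add: matU_def slash_0)
  have fUU: "f (pcl (mmul matU matU)) = slash k P matU + P"
    using Cp_cocyc[OF f SLU SLU] fU by simp
  have w2: "P + slash k P matU + slash k P (mmul matU matU) = 0"
  proof -
    have "mmul matU (mmul matU matU) = mneg (1, 0, 0, 1)" by (simp add: matU_def matT_def matS_def)
    then have "f (pcl (mmul matU (mmul matU matU))) = 0" by (rule Cp_negI[OF f])
    then show ?thesis using Cp_cocyc[OF f SLU SLUU] fU fUU by (simp add: algebra_simps)
  qed
  have w3: "P + slash k P (mmul matS matTw) + slash k P (mmul matTw matS)
       + slash k P (mmul (mmul (mmul matTwinv matS) matTw) matS) = 0"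
  proof -
    have "matTwinv = Tl (- omega)" by (simp add: Tl_def matTwinv_def)
    then have fTi: "f (pcl matTwinv) = 0" using Cp_Tl[OF f, of "- omega"] by (simp add: in_O_uminus)
    define A where "A = mmul matTwinv matS"
    define B where "B = mmul A matTw"
    define Y where "Y = mmul B matS"
    have SA: "A \<in> SL2O" unfolding A_def by (rule SL2O_mmul[OF SL_Twinv SL_S])
    have SB: "B \<in> SL2O" unfolding B_def by (rule SL2O_mmul[OF SA SL_Tw])
    have SY: "Y \<in> SL2O" unfolding Y_def by (rule SL2O_mmul[OF SB SL_S])
    have fA: "f (pcl A) = P" using Cp_cocyc[OF f SL_Twinv SL_S] fTi P_def by (simp add: A_def slash_0)
    have fB: "f (pcl B) = slash k P matTw" using Cp_cocyc[OF f SA SL_Tw] fA fTw by (simp add: B_def)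
    have dTw: "mdet matTw \<noteq> 0" by (simp add: matTw_def)
    have dS: "mdet matS \<noteq> 0" by (simp add: matS_def)
    have fY: "f (pcl Y) = slash k P (mmul matTw matS) + P"
      using Cp_cocyc[OF f SB SL_S] fB P_def by (simp add: Y_def slash_comp[OF dS])
    have YY: "mmul Y Y = mneg (1, 0, 0, 1)"
      by (simp add: Y_def B_def A_def matTwinv_def matS_def matTw_def omega_sq omega_sq' algebra_simps)
    have TSY: "mmul (mmul matTw matS) Y = mmul matS matTw"
      by (simp add: Y_def B_def A_def matTwinv_def matS_def matTw_def omega_sq omega_sq' algebra_simps)
    have dY: "mdet Y \<noteq> 0" using mdet_SL[OF SY] by simp
    have "f (pcl (mmul Y Y)) = 0" using YY by (rule Cp_negI[OF f])
    then have "slash k (f (pcl Y)) Y + f (pcl Y) = 0" using Cp_cocyc[OF f SY SY] by simp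
    then have "slash k P (mmul matS matTw) + slash k P Y + slash k P (mmul matTw matS) + P = 0"
      unfolding fY slash_add slash_comp[OF dY] TSY by (simp add: add.assoc)
    then show ?thesis unfolding Y_def B_def A_def by (simp add: algebra_simps)
  qed
  show ?thesis using PV w1 w2 w3 P_def by (simp add: Wkk_def)
qed

lemma Cp_unique: assumes f: "f \<in> Cp k" and r: "rels k (f (pcl matS))"
  shows "M \<in> SL2O \<Longrightarrow> f (pcl M) = Fr k (f (pcl matS)) (brow M)"
proof (induction "nv (brow M)" arbitrary: M rule: less_induct)
  case less
  define P where "P = f (pcl matS)"
  have r': "rels k P" using r P_def by simp
  obtain a b c e where M: "M = (a, b, c, e)" by (cases M) auto
  have O: "in_O a" "in_O b" "in_O c" "in_O e" and det: "a * e - b * c = 1" using less.prems M by (auto simp: SL2O_def)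
  show ?case
  proof (cases "c = 0")
    case True
    then have ae: "a * e = 1" using det by simp
    then have "a = 1 \<or> a = -1" using unit_O[OF O(1) O(4)] by simp
    then have "f (pcl M) = 0"
    proof
      assume a1: "a = 1"
      then have "e = 1" using ae by simp
      then have "M = Tl b" using M a1 True by (simp add: Tl_def)
      then show ?thesis using Cp_Tl[OF f O(2)] by simp
    next
      assume a1: "a = -1"
      then have "e = -1" using ae by (simp add: minus_equation_iff)
      then have "M = mneg (Tl (- b))" using M a1 True by (simp add: Tl_def)
      then show ?thesis using Cp_Tl[OF f in_O_uminus[OF O(2)]] pcl_mneg by metis
    qed
    moreover have "Fr k P (brow M) = 0" using M True by (simp add: brow_def Fr_zero)
    ultimately show ?thesis using P_def by simp
  next
    case False
    obtain l where l: "in_O l" "cmod (a + l * c) < cmod c" using euclid_O[OF O(1) O(3) False] by blast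
    define M2 where "M2 = mmul (Tl l) M"
    define M1 where "M1 = mmul matS M2"
    have SM2: "M2 \<in> SL2O" unfolding M2_def by (rule SL2O_mmul[OF Tl_SL[OF l(1)] less.prems])
    have SM1: "M1 \<in> SL2O" unfolding M1_def by (rule SL2O_mmul[OF SL_S SM2])
    have M2e: "M2 = (a + l * c, b + l * e, c, e)" by (simp add: M2_def M Tl_def)
    have M1e: "M1 = (- c, - e, a + l * c, b + l * e)" by (simp add: M1_def M2e matS_def)
    have "in_O (a + l * c)" using O l(1) by (simp add: in_O_add in_O_mult)
    then have "nv (brow M1) < nv (brow M)" using l(2) O by (simp add: M1e M brow_def nv_def nO_less)
    then have IH: "f (pcl M1) = Fr k P (brow M1)" using less.hyps SM1 P_def by blast
    have "f (pcl M1) = slash k P M2 + f (pcl M2)" using Cp_cocyc[OF f SL_S SM2] P_def by (simp add: M1_def)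
    also have "f (pcl M2) = f (pcl M)" using Cp_cocyc[OF f Tl_SL[OF l(1)] less.prems] Cp_Tl[OF f l(1)]
      by (simp add: M2_def slash_0)
    finally have fM: "f (pcl M) = Fr k P (brow M1) - slash k P M2" using IH by simp
    have adj: "adj (c, e) (a + l * c, b + l * e)" using SL2O_adj SM2 M2e by simp
    have "Fr k P (c, e) - Fr k P (a + l * c, b + l * e) = om k P (c, e) (a + l * c, b + l * e)"
      using rels.good_all[OF r' adj] by (simp add: rels.Good_def[OF r'])
    also have "om k P (c, e) (a + l * c, b + l * e) = slash k P (mmul (mneg matS) M2)"
    proof -
      have "dt (a + l * c, b + l * e) (c, e) = 1" using det by (simp add: dt_def algebra_simps)
      then show ?thesis by (simp add: om_def M2e matS_def)
    qed
    also have "\<dots> = - slash k P M2"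
    proof -
      have "mdet M2 \<noteq> 0" using mdet_SL[OF SM2] by simp
      then have "slash k P (mmul (mneg matS) M2) = slash k (slash k P (mneg matS)) M2" by (simp add: slash_comp)
      also have "slash k P (mneg matS) = - P" using rels.W1[OF r'] slash_neg[of k P matS]
        by (simp add: eq_neg_iff_add_eq_0 add.commute)
      finally show ?thesis by (simp add: slash_uminus)
    qed
    finally have "Fr k P (c, e) = Fr k P (a + l * c, b + l * e) - slash k P M2" by (simp add: algebra_simps)
    then show ?thesis using fM P_def by (simp add: M1e M brow_def)
  qed
qed

lemma Cp_eq_fP: assumes f: "f \<in> Cp k" shows "f = fP k (f (pcl matS))"
proof
  fix X
  have r: "rels k (f (pcl matS))" using Cp_Wkk[OF f] by (rule Wkk_rels)
  show "f X = fP k (f (pcl matS)) X"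
  proof (cases "X \<in> Gamma2")
    case True
    then obtain M where M: "M \<in> SL2O" "X = pcl M" by (auto simp: Gamma2_iff)
    then show ?thesis using Cp_unique[OF f r M(1)] rels.fP_pcl[OF r M(1)] by simp
  next
    case False then show ?thesis using f by (simp add: Cp_def fP_def)
  qed
qed

theorem proposition5p9:
  fixes k :: nat
  assumes "odd k"
  shows "bij_betw (\<lambda>f. f (pcl matS)) (Cp k) (Wkk k)
    \<and> (\<forall>f\<in>Cp k. \<forall>g\<in>Cp k. \<forall>c::complex.
          (\<lambda>X. smult [:c:] (f X) + g X) \<in> Cp k
          \<and> (\<lambda>X. smult [:c:] (f X) + g X) (pcl matS) = smult [:c:] (f (pcl matS)) + g (pcl matS))"
proof
  show "bij_betw (\<lambda>f. f (pcl matS)) (Cp k) (Wkk k)"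
    unfolding bij_betw_def
  proof
    show "inj_on (\<lambda>f. f (pcl matS)) (Cp k)"
    proof (rule inj_onI)
      fix f g assume "f \<in> Cp k" "g \<in> Cp k" "f (pcl matS) = g (pcl matS)"
      then show "f = g" using Cp_eq_fP by metis
    qed
    show "(\<lambda>f. f (pcl matS)) ` Cp k = Wkk k"
    proof
      show "(\<lambda>f. f (pcl matS)) ` Cp k \<subseteq> Wkk k" using Cp_Wkk by blast
      show "Wkk k \<subseteq> (\<lambda>f. f (pcl matS)) ` Cp k"
      proof
        fix P assume P: "P \<in> Wkk k"
        have r: "rels k P" using P by (rule Wkk_rels)
        have PV: "P \<in> Vkk k" using P by (simp add: Wkk_def)
        have "fP k P \<in> Cp k" by (rule rels.fP_Cp[OF r])
        moreover have "fP k P (pcl matS) = P" by (rule rels.fP_S[OF r PV])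
        ultimately show "P \<in> (\<lambda>f. f (pcl matS)) ` Cp k" by (metis image_eqI)
      qed
    qed
  qed
next
  show "\<forall>f\<in>Cp k. \<forall>g\<in>Cp k. \<forall>c::complex.
          (\<lambda>X. smult [:c:] (f X) + g X) \<in> Cp k
          \<and> (\<lambda>X. smult [:c:] (f X) + g X) (pcl matS) = smult [:c:] (f (pcl matS)) + g (pcl matS)"
  proof (intro ballI allI conjI)
    fix f g c assume f: "f \<in> Cp k" and g: "g \<in> Cp k"
    show "(\<lambda>X. smult [:c:] (f X) + g X) (pcl matS) = smult [:c:] (f (pcl matS)) + g (pcl matS)" by simp
    have 1: "\<forall>X\<in>Gamma2. smult [:c:] (f X) + g X \<in> Vkk k"
      using f g by (auto simp: Cp_def intro: Vkk_add Vkk_smult)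
    have 2: "\<forall>X. X \<notin> Gamma2 \<longrightarrow> smult [:c:] (f X) + g X = 0" using f g by (simp add: Cp_def)
    have 3: "\<forall>X\<in>Gamma2. \<forall>Y\<in>Gamma2. smult [:c:] (f (pmul X Y)) + g (pmul X Y) =
        pslash k (smult [:c:] (f X) + g X) Y + (smult [:c:] (f Y) + g Y)"
      using f g by (simp add: Cp_def pslash_def slash_add slash_smult smult_add_right algebra_simps)
    have 4: "smult [:c:] (f (pcl matT)) + g (pcl matT) = 0" "smult [:c:] (f (pcl matTw)) + g (pcl matTw) = 0"
      using f g by (simp_all add: Cp_def)
    show "(\<lambda>X. smult [:c:] (f X) + g X) \<in> Cp k" using 1 2 3 4 by (simp add: Cp_def)
  qed
qed


end
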